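(* Let $\mathscr H_\kappa$ be a functional Hilbert space with property (A). Suppose $\mathscr H_\kappa$ is an algebra under pointwise product and the spectrum of the operator $M_z$ of multiplication by $z$ on $\mathscr H_\kappa$ equals $\overline{\mathbb D}$. Then every function in $\mathscr H_\kappa$ extends continuously to $\overline{\mathbb D}$ (i.e. $\mathscr H_\kappa\subseteq C(\overline{\mathbb D})$), and every closed $M_z$-invariant subspace of $\mathscr H_\kappa$ is an ideal. Furthermore, for $f\in\mathscr H_\kappa$ the following are equivalent: (a) $f$ is cyclic, i.e. the smallest closed $M_z$-invariant subspace containing $f$ is $\mathscr H_\kappa$; (b) $f$ is invertible in $\mathrm{Mult}(\mathscr H_\kappa)$; (c) (the continuous extension of) $f$ has no zero in $\overline{\mathbb D}$.
   Context: A functional Hilbert space with property (A) is a reproducing kernel Hilbert space $\mathscr H_\kappa$ of holomorphic functions on the open unit disc $\mathbb D$ with sesqui-analytic reproducing kernel $\kappa$ such that: (A1) $\kappa(w,0)=1$ for all $w\in\mathbb D$; (A2) $zf\in\mathscr H_\kappa$ for every $f\in\mathscr H_\kappa$; (A3) the polynomials are dense in $\mathscr H_\kappa$. $\mathrm{Mult}(\mathscr H_\kappa)=\{\varphi:\varphi f\in\mathscr H_\kappa\ \forall f\in\mathscr H_\kappa\}$, a Banach algebra with the operator norm of $f\mapsto\varphi f$. *)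

theory Defs
  imports "HOL-Complex_Analysis.Complex_Analysis"
begin

text \<open>Elements of a functional Hilbert space on the unit disc are represented as
functions complex => complex that vanish outside the open unit disc
(only their values on the disc are meaningful).\<close>

definition disc :: "complex set" where "disc = ball 0 1"

definition dres :: "(complex \<Rightarrow> complex) \<Rightarrow> complex \<Rightarrow> complex" where
  "dres f = (\<lambda>z. if z \<in> disc then f z else 0)"

definition hnorm :: "((complex \<Rightarrow> complex) \<Rightarrow> (complex \<Rightarrow> complex) \<Rightarrow> complex)
    \<Rightarrow> (complex \<Rightarrow> complex) \<Rightarrow> real" where
  "hnorm ip f = sqrt (Re (ip f f))"

definition hdiff :: "(complex \<Rightarrow> complex) \<Rightarrow> (complex \<Rightarrow> complex) \<Rightarrow> complex \<Rightarrow> complex" where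
  "hdiff f g = (\<lambda>z. f z - g z)"

definition fun_hilbert :: "(complex \<Rightarrow> complex) set
    \<Rightarrow> ((complex \<Rightarrow> complex) \<Rightarrow> (complex \<Rightarrow> complex) \<Rightarrow> complex) \<Rightarrow> bool" where
  "fun_hilbert H ip \<longleftrightarrow>
     (\<forall>f\<in>H. \<forall>z. z \<notin> disc \<longrightarrow> f z = 0) \<and>
     (\<lambda>_. 0) \<in> H \<and>
     (\<forall>f\<in>H. \<forall>g\<in>H. (\<lambda>z. f z + g z) \<in> H) \<and>
     (\<forall>f\<in>H. \<forall>c. (\<lambda>z. c * f z) \<in> H) \<and>
     (\<forall>f\<in>H. \<forall>g\<in>H. \<forall>h\<in>H. ip (\<lambda>z. f z + g z) h = ip f h + ip g h) \<and>
     (\<forall>f\<in>H. \<forall>g\<in>H. \<forall>c. ip (\<lambda>z. c * f z) g = c * ip f g) \<and>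
     (\<forall>f\<in>H. \<forall>g\<in>H. ip g f = cnj (ip f g)) \<and>
     (\<forall>f\<in>H. Re (ip f f) \<ge> 0) \<and>
     (\<forall>f\<in>H. ip f f = 0 \<longrightarrow> f = (\<lambda>_. 0)) \<and>
     (\<forall>s. (\<forall>n. s n \<in> H) \<and>
          (\<forall>e>0. \<exists>N. \<forall>m\<ge>N. \<forall>n\<ge>N. hnorm ip (hdiff (s m) (s n)) < e)
        \<longrightarrow> (\<exists>f\<in>H. (\<lambda>n. hnorm ip (hdiff (s n) f)) \<longlonglongrightarrow> 0))"

text \<open>Reproducing kernel: RK H ip w is the kernel function at w (f w = <f, k_w>),
and kernel H ip z w = kappa(z,w) = k_w(z).\<close>
definition RK :: "(complex \<Rightarrow> complex) set
    \<Rightarrow> ((complex \<Rightarrow> complex) \<Rightarrow> (complex \<Rightarrow> complex) \<Rightarrow> complex) \<Rightarrow> complex \<Rightarrow> complex \<Rightarrow> complex" where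
  "RK H ip w = (THE k. k \<in> H \<and> (\<forall>f\<in>H. f w = ip f k))"

definition kernel :: "(complex \<Rightarrow> complex) set
    \<Rightarrow> ((complex \<Rightarrow> complex) \<Rightarrow> (complex \<Rightarrow> complex) \<Rightarrow> complex) \<Rightarrow> complex \<Rightarrow> complex \<Rightarrow> complex" where
  "kernel H ip z w = RK H ip w z"

definition rkhs_disc :: "(complex \<Rightarrow> complex) set
    \<Rightarrow> ((complex \<Rightarrow> complex) \<Rightarrow> (complex \<Rightarrow> complex) \<Rightarrow> complex) \<Rightarrow> bool" where
  "rkhs_disc H ip \<longleftrightarrow> fun_hilbert H ip \<and>
     (\<forall>f\<in>H. f holomorphic_on disc) \<and>
     (\<forall>w\<in>disc. \<exists>k\<in>H. \<forall>f\<in>H. f w = ip f k)"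

definition Mz :: "(complex \<Rightarrow> complex) \<Rightarrow> complex \<Rightarrow> complex" where
  "Mz f = (\<lambda>z. z * f z)"

definition property_A :: "(complex \<Rightarrow> complex) set
    \<Rightarrow> ((complex \<Rightarrow> complex) \<Rightarrow> (complex \<Rightarrow> complex) \<Rightarrow> complex) \<Rightarrow> bool" where
  "property_A H ip \<longleftrightarrow> rkhs_disc H ip \<and>
     (\<forall>w\<in>disc. kernel H ip w 0 = 1) \<and>
     (\<forall>f\<in>H. Mz f \<in> H) \<and>
     (\<forall>f\<in>H. \<forall>e>0. \<exists>p. dres (poly p) \<in> H \<and> hnorm ip (hdiff f (dres (poly p))) < e)"

definition bounded_op_on :: "(complex \<Rightarrow> complex) set
    \<Rightarrow> ((complex \<Rightarrow> complex) \<Rightarrow> (complex \<Rightarrow> complex) \<Rightarrow> complex)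
    \<Rightarrow> ((complex \<Rightarrow> complex) \<Rightarrow> (complex \<Rightarrow> complex)) \<Rightarrow> bool" where
  "bounded_op_on H ip T \<longleftrightarrow>
     (\<forall>f\<in>H. T f \<in> H) \<and>
     (\<forall>f\<in>H. \<forall>g\<in>H. T (\<lambda>z. f z + g z) = (\<lambda>z. T f z + T g z)) \<and>
     (\<forall>f\<in>H. \<forall>c. T (\<lambda>z. c * f z) = (\<lambda>z. c * T f z)) \<and>
     (\<exists>C. \<forall>f\<in>H. hnorm ip (T f) \<le> C * hnorm ip f)"

definition spectrum_op :: "(complex \<Rightarrow> complex) set
    \<Rightarrow> ((complex \<Rightarrow> complex) \<Rightarrow> (complex \<Rightarrow> complex) \<Rightarrow> complex)
    \<Rightarrow> ((complex \<Rightarrow> complex) \<Rightarrow> (complex \<Rightarrow> complex)) \<Rightarrow> complex set" where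
  "spectrum_op H ip T = {c. \<not> (\<exists>S. bounded_op_on H ip S \<and>
       (\<forall>f\<in>H. S (\<lambda>z. T f z - c * f z) = f) \<and>
       (\<forall>f\<in>H. (\<lambda>z. T (S f) z - c * S f z) = f))}"

definition closed_inv_subspace :: "(complex \<Rightarrow> complex) set
    \<Rightarrow> ((complex \<Rightarrow> complex) \<Rightarrow> (complex \<Rightarrow> complex) \<Rightarrow> complex) \<Rightarrow> (complex \<Rightarrow> complex) set \<Rightarrow> bool" where
  "closed_inv_subspace H ip M \<longleftrightarrow> M \<subseteq> H \<and>
     (\<lambda>_. 0) \<in> M \<and>
     (\<forall>f\<in>M. \<forall>g\<in>M. (\<lambda>z. f z + g z) \<in> M) \<and>
     (\<forall>f\<in>M. \<forall>c. (\<lambda>z. c * f z) \<in> M) \<and>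
     (\<forall>s f. (\<forall>n. s n \<in> M) \<and> f \<in> H \<and> (\<lambda>n. hnorm ip (hdiff (s n) f)) \<longlonglongrightarrow> 0 \<longrightarrow> f \<in> M) \<and>
     (\<forall>f\<in>M. Mz f \<in> M)"

definition cyclic :: "(complex \<Rightarrow> complex) set
    \<Rightarrow> ((complex \<Rightarrow> complex) \<Rightarrow> (complex \<Rightarrow> complex) \<Rightarrow> complex) \<Rightarrow> (complex \<Rightarrow> complex) \<Rightarrow> bool" where
  "cyclic H ip f \<longleftrightarrow> \<Inter>{M. closed_inv_subspace H ip M \<and> f \<in> M} = H"

definition Mult :: "(complex \<Rightarrow> complex) set \<Rightarrow> (complex \<Rightarrow> complex) set" where
  "Mult H = {\<phi>. \<forall>f\<in>H. (\<lambda>z. \<phi> z * f z) \<in> H}"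

text \<open>Invertibility in Mult(H): the unit of Mult(H) is the constant 1, and
multipliers are identified when they agree on the disc.\<close>
definition invertible_mult :: "(complex \<Rightarrow> complex) set \<Rightarrow> (complex \<Rightarrow> complex) \<Rightarrow> bool" where
  "invertible_mult H \<phi> \<longleftrightarrow> \<phi> \<in> Mult H \<and> (\<exists>\<psi>\<in>Mult H. \<forall>z\<in>disc. \<phi> z * \<psi> z = 1)"

end

theory Submission
  imports Defs
begin

locale FH =
  fixes H :: "(complex \<Rightarrow> complex) set"
    and ip :: "(complex \<Rightarrow> complex) \<Rightarrow> (complex \<Rightarrow> complex) \<Rightarrow> complex"
  assumes PA: "property_A H ip"
    and alg: "\<forall>f\<in>H. \<forall>g\<in>H. (\<lambda>z. f z * g z) \<in> H"
    and spec: "spectrum_op H ip Mz = cball 0 1"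
begin

abbreviation nm where "nm f \<equiv> hnorm ip f"

lemma FHIL: "fun_hilbert H ip" using PA unfolding property_A_def rkhs_disc_def by blast

lemma out0: "f \<in> H \<Longrightarrow> z \<notin> disc \<Longrightarrow> f z = 0"
  using FHIL unfolding fun_hilbert_def by blast
lemma zero_in[simp]: "(\<lambda>_. 0) \<in> H"
  using FHIL unfolding fun_hilbert_def by blast
lemma add_in[simp]: "f \<in> H \<Longrightarrow> g \<in> H \<Longrightarrow> (\<lambda>z. f z + g z) \<in> H"
  using FHIL unfolding fun_hilbert_def by blast
lemma scale_in[simp]: "f \<in> H \<Longrightarrow> (\<lambda>z. c * f z) \<in> H"
  using FHIL unfolding fun_hilbert_def by blast
lemma ip_add: "f \<in> H \<Longrightarrow> g \<in> H \<Longrightarrow> h \<in> H \<Longrightarrow> ip (\<lambda>z. f z + g z) h = ip f h + ip g h"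
  using FHIL unfolding fun_hilbert_def by blast
lemma ip_scale: "f \<in> H \<Longrightarrow> g \<in> H \<Longrightarrow> ip (\<lambda>z. c * f z) g = c * ip f g"
  using FHIL unfolding fun_hilbert_def by blast
lemma ip_cnj: "f \<in> H \<Longrightarrow> g \<in> H \<Longrightarrow> ip g f = cnj (ip f g)"
  using FHIL unfolding fun_hilbert_def by blast
lemma ip_pos: "f \<in> H \<Longrightarrow> Re (ip f f) \<ge> 0"
  using FHIL unfolding fun_hilbert_def by blast
lemma ip_def0: "f \<in> H \<Longrightarrow> ip f f = 0 \<Longrightarrow> f = (\<lambda>_. 0)"
  using FHIL unfolding fun_hilbert_def by blast
lemma complete: "(\<forall>n. s n \<in> H) \<Longrightarrow> (\<forall>e>0. \<exists>N. \<forall>m\<ge>N. \<forall>n\<ge>N. nm (hdiff (s m) (s n)) < e)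
        \<Longrightarrow> (\<exists>f\<in>H. (\<lambda>n. nm (hdiff (s n) f)) \<longlonglongrightarrow> 0)"
  using FHIL unfolding fun_hilbert_def by blast

lemma mul_in[simp]: "f \<in> H \<Longrightarrow> g \<in> H \<Longrightarrow> (\<lambda>z. f z * g z) \<in> H"
  using alg by auto
lemma lin_in[simp]: "f \<in> H \<Longrightarrow> g \<in> H \<Longrightarrow> (\<lambda>z. a * f z + b * g z) \<in> H"
  by simp
lemma diff_in[simp]: "f \<in> H \<Longrightarrow> g \<in> H \<Longrightarrow> (\<lambda>z. f z - g z) \<in> H"
proof -
  assume "f \<in> H" "g \<in> H"
  then have "(\<lambda>z. 1 * f z + (-1) * g z) \<in> H" by (rule lin_in)
  then show ?thesis by simp
qed
lemma hdiff_in[simp]: "f \<in> H \<Longrightarrow> g \<in> H \<Longrightarrow> hdiff f g \<in> H"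
  unfolding hdiff_def by simp
lemma neg_in[simp]: "f \<in> H \<Longrightarrow> (\<lambda>z. - f z) \<in> H"
  using scale_in[of f "-1"] by simp
lemma Mz_in[simp]: "f \<in> H \<Longrightarrow> Mz f \<in> H"
  using PA unfolding property_A_def by blast
lemma zmul_in[simp]: "f \<in> H \<Longrightarrow> (\<lambda>z. z * f z) \<in> H"
  using Mz_in unfolding Mz_def by auto

lemma ip_scale_r: "f \<in> H \<Longrightarrow> g \<in> H \<Longrightarrow> ip f (\<lambda>z. c * g z) = cnj c * ip f g"
proof -
  assume a: "f \<in> H" "g \<in> H"
  have "ip f (\<lambda>z. c * g z) = cnj (ip (\<lambda>z. c * g z) f)" using a ip_cnj[of "\<lambda>z. c * g z" f] by simp
  also have "\<dots> = cnj c * cnj (ip g f)" using a by (simp add: ip_scale)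
  also have "cnj (ip g f) = ip f g" using a ip_cnj[of f g] by simp
  finally show ?thesis .
qed
lemma ip_add_r: "f \<in> H \<Longrightarrow> g \<in> H \<Longrightarrow> h \<in> H \<Longrightarrow> ip h (\<lambda>z. f z + g z) = ip h f + ip h g"
proof -
  assume a: "f \<in> H" "g \<in> H" "h \<in> H"
  have "ip h (\<lambda>z. f z + g z) = cnj (ip (\<lambda>z. f z + g z) h)" using a ip_cnj[of "\<lambda>z. f z + g z" h] by simp
  also have "\<dots> = cnj (ip f h) + cnj (ip g h)" using a by (simp add: ip_add)
  also have "cnj (ip f h) = ip h f" using a ip_cnj[of h f] by simp
  also have "cnj (ip g h) = ip h g" using a ip_cnj[of h g] by simp
  finally show ?thesis .
qed
lemma ip_zero_l[simp]: "g \<in> H \<Longrightarrow> ip (\<lambda>_. 0) g = 0"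
  using ip_scale[of "\<lambda>_. 0" g 0] by simp
lemma ip_zero_r[simp]: "g \<in> H \<Longrightarrow> ip g (\<lambda>_. 0) = 0"
  using ip_scale_r[of g "\<lambda>_. 0" 0] by simp
lemma ip_diff: "f \<in> H \<Longrightarrow> g \<in> H \<Longrightarrow> h \<in> H \<Longrightarrow> ip (\<lambda>z. f z - g z) h = ip f h - ip g h"
proof -
  assume a: "f \<in> H" "g \<in> H" "h \<in> H"
  have "ip (\<lambda>z. f z + (\<lambda>z. (-1) * g z) z) h = ip f h + ip (\<lambda>z. (-1) * g z) h"
    using a by (intro ip_add) auto
  moreover have "ip (\<lambda>z. (-1) * g z) h = - ip g h" using a ip_scale[of g h "-1"] by simp
  ultimately show ?thesis by simp
qed
lemma ip_diff_r: "f \<in> H \<Longrightarrow> g \<in> H \<Longrightarrow> h \<in> H \<Longrightarrow> ip h (\<lambda>z. f z - g z) = ip h f - ip h g"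
proof -
  assume a: "f \<in> H" "g \<in> H" "h \<in> H"
  have "ip h (\<lambda>z. f z - g z) = cnj (ip (\<lambda>z. f z - g z) h)" using a ip_cnj[of "\<lambda>z. f z - g z" h] by simp
  also have "\<dots> = cnj (ip f h) - cnj (ip g h)" using a by (simp add: ip_diff)
  also have "cnj (ip f h) = ip h f" using a ip_cnj[of h f] by simp
  also have "cnj (ip g h) = ip h g" using a ip_cnj[of h g] by simp
  finally show ?thesis .
qed

lemma ip_real: "f \<in> H \<Longrightarrow> ip f f = of_real (Re (ip f f))"
proof -
  assume "f \<in> H"
  then have "ip f f = cnj (ip f f)" using ip_cnj[of f f] by simp
  then have "Im (ip f f) = 0" by (metis cnj.sel(2) equal_neg_zero)
  then show ?thesis by (simp add: complex_eq_iff)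
qed

lemma nm_nonneg[simp]: "f \<in> H \<Longrightarrow> nm f \<ge> 0" unfolding hnorm_def using ip_pos by simp
lemma nm_sq: "f \<in> H \<Longrightarrow> (nm f)^2 = Re (ip f f)"
  unfolding hnorm_def using ip_pos by simp
lemma ip_self: "f \<in> H \<Longrightarrow> ip f f = of_real ((nm f)^2)"
  using ip_real nm_sq by auto
lemma nm_zero_iff: "f \<in> H \<Longrightarrow> nm f = 0 \<longleftrightarrow> f = (\<lambda>_. 0)"
proof
  assume a: "f \<in> H" "nm f = 0"
  then have "ip f f = 0" using ip_self[of f] by simp
  then show "f = (\<lambda>_. 0)" using a ip_def0 by blast
next
  assume "f \<in> H" "f = (\<lambda>_. 0)"
  then show "nm f = 0" unfolding hnorm_def by simp
qed
lemma nm_zero[simp]: "nm (\<lambda>_. 0) = 0" using nm_zero_iff by simp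

lemma nm_scale: "f \<in> H \<Longrightarrow> nm (\<lambda>z. c * f z) = cmod c * nm f"
proof -
  assume a: "f \<in> H"
  have "ip (\<lambda>z. c * f z) (\<lambda>z. c * f z) = c * cnj c * ip f f"
    using a by (simp add: ip_scale ip_scale_r)
  also have "\<dots> = of_real ((cmod c)^2) * of_real ((nm f)^2)" using a by (simp only: ip_self complex_norm_square)
  also have "\<dots> = of_real ((cmod c)^2 * (nm f)^2)" by simp
  finally have "(nm (\<lambda>z. c * f z))^2 = (cmod c * nm f)^2"
    using a by (simp add: nm_sq power_mult_distrib)
  then show ?thesis using a by (simp add: power2_eq_iff_nonneg)
qed

lemma nm_add_sq: "f \<in> H \<Longrightarrow> g \<in> H \<Longrightarrow> (nm (\<lambda>z. f z + g z))^2 = (nm f)^2 + (nm g)^2 + 2 * Re (ip f g)"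
proof -
  assume a: "f \<in> H" "g \<in> H"
  have "ip (\<lambda>z. f z + g z) (\<lambda>z. f z + g z) = ip f f + ip f g + ip g f + ip g g"
    using a by (simp add: ip_add ip_add_r)
  moreover have "Re (ip g f) = Re (ip f g)" using a ip_cnj[of f g] by simp
  ultimately show ?thesis using a by (simp add: nm_sq)
qed

lemma nm_diff_sq: "f \<in> H \<Longrightarrow> g \<in> H \<Longrightarrow> (nm (\<lambda>z. f z - g z))^2 = (nm f)^2 + (nm g)^2 - 2 * Re (ip f g)"
proof -
  assume a: "f \<in> H" "g \<in> H"
  have "ip (\<lambda>z. f z - g z) (\<lambda>z. f z - g z) = ip f f - ip f g - ip g f + ip g g"
    using a by (simp add: ip_diff ip_diff_r)
  moreover have "Re (ip g f) = Re (ip f g)" using a ip_cnj[of f g] by simp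
  ultimately show ?thesis using a by (simp add: nm_sq)
qed

lemma cauchy_schwarz: "f \<in> H \<Longrightarrow> g \<in> H \<Longrightarrow> cmod (ip f g) \<le> nm f * nm g"
proof -
  assume a: "f \<in> H" "g \<in> H"
  show ?thesis
  proof (cases "nm g = 0")
    case True
    then have "g = (\<lambda>_. 0)" using a nm_zero_iff by blast
    then show ?thesis using a by simp
  next
    case False
    define N where "N = (nm g)^2"
    have Np: "N > 0" using False a N_def by (simp add: order_less_le)
    define A where "A = ip f g"
    define t where "t = A / of_real N"
    have "0 \<le> (nm (\<lambda>z. f z - t * g z))^2" by simp
    also have "\<dots> = (nm f)^2 + (nm (\<lambda>z. t * g z))^2 - 2 * Re (ip f (\<lambda>z. t * g z))"
      using a by (simp add: nm_diff_sq)
    also have "(nm (\<lambda>z. t * g z))^2 = (cmod t)^2 * N" using a by (simp add: nm_scale N_def power_mult_distrib)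
    also have "ip f (\<lambda>z. t * g z) = cnj t * A" using a by (simp add: ip_scale_r A_def)
    also have "(cmod t)^2 * N = (cmod A)^2 / N" using Np by (simp add: t_def norm_divide power2_eq_square)
    also have "Re (cnj t * A) = (cmod A)^2 / N"
    proof -
      have "cnj t * A = cnj A * A / of_real N" by (simp add: t_def)
      also have "cnj A * A = of_real ((cmod A)^2)" by (simp only: complex_norm_square mult.commute)
      finally show ?thesis by (metis Re_complex_of_real of_real_divide)
    qed
    finally have "(cmod A)^2 / N \<le> (nm f)^2" by simp
    then have "(cmod A)^2 \<le> (nm f)^2 * N" using Np by (simp add: divide_le_eq)
    then have "(cmod A)^2 \<le> (nm f * nm g)^2" by (simp add: N_def power_mult_distrib)
    then show ?thesis using a by (simp add: A_def power2_le_iff_abs_le)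
  qed
qed

lemma nm_tri: "f \<in> H \<Longrightarrow> g \<in> H \<Longrightarrow> nm (\<lambda>z. f z + g z) \<le> nm f + nm g"
proof -
  assume a: "f \<in> H" "g \<in> H"
  have "Re (ip f g) \<le> cmod (ip f g)" by (rule complex_Re_le_cmod)
  then have "Re (ip f g) \<le> nm f * nm g" using cauchy_schwarz[OF a] by linarith
  then have e: "2 * Re (ip f g) \<le> 2 * nm f * nm g" by simp
  have "(nm (\<lambda>z. f z + g z))^2 \<le> (nm f + nm g)^2"
    unfolding nm_add_sq[OF a] power2_sum using e by linarith
  moreover have "0 \<le> nm f + nm g" using a by simp
  ultimately show ?thesis by (rule power2_le_imp_le)
qed

lemma nm_neg: "f \<in> H \<Longrightarrow> nm (\<lambda>z. - f z) = nm f"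
  using nm_scale[of f "-1"] by simp

lemma nm_tri_diff: "f \<in> H \<Longrightarrow> g \<in> H \<Longrightarrow> nm (\<lambda>z. f z - g z) \<le> nm f + nm g"
  using nm_tri[of f "\<lambda>z. - g z"] nm_neg[of g] by simp

lemma nm_sym: "f \<in> H \<Longrightarrow> g \<in> H \<Longrightarrow> nm (\<lambda>z. f z - g z) = nm (\<lambda>z. g z - f z)"
  using nm_neg[of "\<lambda>z. g z - f z"] by simp

lemma nm_tri3: "f \<in> H \<Longrightarrow> g \<in> H \<Longrightarrow> h \<in> H \<Longrightarrow>
   nm (\<lambda>z. f z - h z) \<le> nm (\<lambda>z. f z - g z) + nm (\<lambda>z. g z - h z)"
  using nm_tri[of "\<lambda>z. f z - g z" "\<lambda>z. g z - h z"] by simp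

lemma ip_bound_l: "f \<in> H \<Longrightarrow> g \<in> H \<Longrightarrow> cmod (ip f g) \<le> nm f * nm g" by (rule cauchy_schwarz)

lemma sq_le: "0 \<le> x \<Longrightarrow> x \<le> 1 \<Longrightarrow> x^2 \<le> (x::real)"
  by (simp add: power2_eq_square mult_left_le_one_le)

lemma proj_step: "x \<in> H \<Longrightarrow> v \<in> H \<Longrightarrow> nm v \<noteq> 0 \<Longrightarrow>
   (nm (\<lambda>z. x z - (ip x v / of_real ((nm v)^2)) * v z))^2 = (nm x)^2 - (cmod (ip x v))^2 / (nm v)^2"
proof -
  assume a: "x \<in> H" "v \<in> H" and nz: "nm v \<noteq> 0"
  define N where "N = (nm v)^2"
  have Np: "N > 0" using nz a N_def by (simp add: order_less_le)
  define A where "A = ip x v"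
  define t where "t = A / of_real N"
  have "(nm (\<lambda>z. x z - t * v z))^2 = (nm x)^2 + (nm (\<lambda>z. t * v z))^2 - 2 * Re (ip x (\<lambda>z. t * v z))"
    using a by (simp add: nm_diff_sq)
  also have "(nm (\<lambda>z. t * v z))^2 = (cmod t)^2 * N" using a by (simp add: nm_scale N_def power_mult_distrib)
  also have "ip x (\<lambda>z. t * v z) = cnj t * A" using a by (simp add: ip_scale_r A_def)
  also have "(cmod t)^2 * N = (cmod A)^2 / N" using Np by (simp add: t_def norm_divide power2_eq_square)
  also have "Re (cnj t * A) = (cmod A)^2 / N"
  proof -
    have "cnj t * A = cnj A * A / of_real N" by (simp add: t_def)
    also have "cnj A * A = of_real ((cmod A)^2)" by (simp only: complex_norm_square mult.commute)
    finally show ?thesis by (metis Re_complex_of_real of_real_divide)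
  qed
  finally show ?thesis by (simp add: t_def A_def N_def)
qed

lemma min_orth: "x \<in> H \<Longrightarrow> v \<in> H \<Longrightarrow> (\<And>t. nm x \<le> nm (\<lambda>z. x z - t * v z)) \<Longrightarrow> ip x v = 0"
proof (rule ccontr)
  assume a: "x \<in> H" "v \<in> H" and m: "\<And>t. nm x \<le> nm (\<lambda>z. x z - t * v z)" and ne: "ip x v \<noteq> 0"
  have nz: "nm v \<noteq> 0"
  proof
    assume "nm v = 0" then have "v = (\<lambda>_. 0)" using a nm_zero_iff by blast
    then show False using ne a by simp
  qed
  let ?t = "ip x v / of_real ((nm v)^2)"
  have "(nm x)^2 \<le> (nm (\<lambda>z. x z - ?t * v z))^2" using m[of ?t] a by (simp add: power_mono)
  also have "\<dots> = (nm x)^2 - (cmod (ip x v))^2 / (nm v)^2" by (rule proj_step[OF a nz])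
  finally have "(cmod (ip x v))^2 / (nm v)^2 \<le> 0" by simp
  moreover have "(cmod (ip x v))^2 / (nm v)^2 > 0" using ne nz by simp
  ultimately show False by simp
qed

lemma parallelogram: "x \<in> H \<Longrightarrow> y \<in> H \<Longrightarrow>
  (nm (\<lambda>z. x z + y z))^2 + (nm (\<lambda>z. x z - y z))^2 = 2 * (nm x)^2 + 2 * (nm y)^2"
  by (simp add: nm_add_sq nm_diff_sq)

definition csub :: "(complex \<Rightarrow> complex) set \<Rightarrow> bool" where
  "csub V \<longleftrightarrow> V \<subseteq> H \<and> (\<lambda>_. 0) \<in> V \<and> (\<forall>f\<in>V. \<forall>g\<in>V. (\<lambda>z. f z + g z) \<in> V) \<and>
     (\<forall>f\<in>V. \<forall>c. (\<lambda>z. c * f z) \<in> V) \<and>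
     (\<forall>s f. (\<forall>n. s n \<in> V) \<and> f \<in> H \<and> (\<lambda>n. nm (\<lambda>z. s n z - f z)) \<longlonglongrightarrow> 0 \<longrightarrow> f \<in> V)"

lemma complete': "(\<And>n. s n \<in> H) \<Longrightarrow> (\<And>e. e > 0 \<Longrightarrow> \<exists>N. \<forall>m\<ge>N. \<forall>n\<ge>N. nm (\<lambda>z. s m z - s n z) < e)
        \<Longrightarrow> (\<exists>f\<in>H. (\<lambda>n. nm (\<lambda>z. s n z - f z)) \<longlonglongrightarrow> 0)"
  using complete[of s] unfolding hdiff_def by blast

lemma projection:
  assumes V: "csub V" and u: "u \<in> H"
  shows "\<exists>p\<in>V. \<forall>v\<in>V. ip (\<lambda>z. u z - p z) v = 0"
proof -
  have VH: "V \<subseteq> H" and V0: "(\<lambda>_. 0) \<in> V" and Vadd: "\<And>f g. f \<in> V \<Longrightarrow> g \<in> V \<Longrightarrow> (\<lambda>z. f z + g z) \<in> V"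
    and Vsc: "\<And>f c. f \<in> V \<Longrightarrow> (\<lambda>z. c * f z) \<in> V"
    and Vcl: "\<And>s f. (\<And>n. s n \<in> V) \<Longrightarrow> f \<in> H \<Longrightarrow> (\<lambda>n. nm (\<lambda>z. s n z - f z)) \<longlonglongrightarrow> 0 \<Longrightarrow> f \<in> V"
    using V unfolding csub_def by blast+
  define D where "D = (\<lambda>v. nm (\<lambda>z. u z - v z)) ` V"
  define d where "d = Inf D"
  have Dne: "D \<noteq> {}" using V0 D_def by blast
  have Dbdd: "bdd_below D" unfolding D_def bdd_below_def using VH u by (intro exI[of _ 0]) auto
  have dle: "d \<le> nm (\<lambda>z. u z - v z)" if "v \<in> V" for v
    unfolding d_def D_def using that Dbdd D_def by (intro cInf_lower) auto
  have d0: "d \<ge> 0" using dle[OF V0] Dne unfolding d_def D_def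
    using VH u by (intro cInf_greatest) auto
  have "\<exists>v\<in>V. nm (\<lambda>z. u z - v z) < d + 1 / (real n + 1)" for n
  proof -
    have "Inf D < d + 1 / (real n + 1)" unfolding d_def by simp
    then obtain x where "x \<in> D" "x < d + 1 / (real n + 1)" using cInf_lessD[OF Dne] by blast
    then show ?thesis unfolding D_def by blast
  qed
  then obtain vs where vsV: "\<And>n. vs n \<in> V" and vsd: "\<And>n. nm (\<lambda>z. u z - vs n z) < d + 1 / (real n + 1)"
    by metis
  have vsH: "vs n \<in> H" for n using vsV VH by blast
  have key: "(nm (\<lambda>z. vs m z - vs n z))^2 \<le> 4 * d * (1/(real m+1) + 1/(real n+1)) + 2 * (1/(real m+1))^2 + 2 * (1/(real n+1))^2" for m n
  proof -
    let ?x = "\<lambda>z. u z - vs m z" and ?y = "\<lambda>z. u z - vs n z"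
    have xH: "?x \<in> H" and yH: "?y \<in> H" using vsH u by auto
    have mid: "(\<lambda>z. (1/2) * vs m z + (1/2) * vs n z) \<in> V" using Vadd Vsc vsV by blast
    have "(\<lambda>z. ?x z + ?y z) = (\<lambda>z. 2 * (u z - ((1/2) * vs m z + (1/2) * vs n z)))"
      by (auto simp: algebra_simps)
    moreover have memb: "(\<lambda>z. u z - ((1/2) * vs m z + (1/2) * vs n z)) \<in> H" using u vsH by (intro diff_in lin_in) auto
    ultimately have "nm (\<lambda>z. ?x z + ?y z) = 2 * nm (\<lambda>z. u z - ((1/2) * vs m z + (1/2) * vs n z))"
      using nm_scale[OF memb, of 2] by simp
    also have "\<dots> \<ge> 2 * d" using dle[OF mid] by simp
    finally have s1: "(2*d)^2 \<le> (nm (\<lambda>z. ?x z + ?y z))^2" using d0 by (intro power_mono) auto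
    have "(\<lambda>z. ?x z - ?y z) = (\<lambda>z. vs n z - vs m z)" by auto
    then have e: "(nm (\<lambda>z. vs n z - vs m z))^2 = 2 * (nm ?x)^2 + 2 * (nm ?y)^2 - (nm (\<lambda>z. ?x z + ?y z))^2"
      using parallelogram[OF xH yH] by simp
    have bx: "(nm ?x)^2 \<le> (d + 1/(real m+1))^2" using vsd[of m] xH by (intro power_mono) auto
    have byy: "(nm ?y)^2 \<le> (d + 1/(real n+1))^2" using vsd[of n] yH by (intro power_mono) auto
    have "(nm (\<lambda>z. vs m z - vs n z))^2 = (nm (\<lambda>z. vs n z - vs m z))^2" using nm_sym vsH by metis
    also have "\<dots> \<le> 2 * (d + 1/(real m+1))^2 + 2 * (d + 1/(real n+1))^2 - (2*d)^2"
      using e bx byy s1 by linarith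
    also have "\<dots> = 4 * d * (1/(real m+1) + 1/(real n+1)) + 2 * (1/(real m+1))^2 + 2 * (1/(real n+1))^2"
      by (simp add: power2_eq_square algebra_simps)
    finally show ?thesis .
  qed
  have cauchy: "\<exists>N. \<forall>m\<ge>N. \<forall>n\<ge>N. nm (\<lambda>z. vs m z - vs n z) < e" if e: "e > 0" for e
  proof -
    obtain N0 :: nat where "(8 * d + 4) / e^2 < real N0"
      using reals_Archimedean2 by blast
    then obtain N :: nat where N: "(8 * d + 4) / e^2 < real N + 1" by (intro that[of N0]) linarith
    have Np: "(8 * d + 4) / (real N + 1) < e^2" using N e
      by (simp add: divide_less_eq mult.commute)
    show ?thesis
    proof (intro exI allI impI)
      fix m n assume mn: "m \<ge> N" "n \<ge> N"
      have im: "1/(real m+1) \<le> 1/(real N+1)" and inn: "1/(real n+1) \<le> 1/(real N+1)"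
        using mn by (simp_all add: frac_le)
      have im2: "(1/(real m+1))^2 \<le> 1/(real N+1)" using im sq_le[of "1/(real m+1)"] by simp
      have in2: "(1/(real n+1))^2 \<le> 1/(real N+1)" using inn sq_le[of "1/(real n+1)"] by simp
      have "4 * d * (1/(real m+1) + 1/(real n+1)) \<le> 4 * d * (2 / (real N + 1))"
        using im inn d0 by (intro mult_left_mono) auto
      then have "(nm (\<lambda>z. vs m z - vs n z))^2 \<le> 4 * d * (2 / (real N + 1)) + 2 * (1/(real N+1)) + 2 * (1/(real N+1))"
        using key[of m n] im2 in2 by linarith
      also have "\<dots> = (8 * d + 4) / (real N + 1)" by (simp add: add_divide_distrib)
      also have "\<dots> < e^2" by (rule Np)
      finally have "(nm (\<lambda>z. vs m z - vs n z))^2 < e^2" .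
      then show "nm (\<lambda>z. vs m z - vs n z) < e" using e by (meson power_less_imp_less_base less_imp_le)
    qed
  qed
  from complete'[OF vsH cauchy] obtain p where pH: "p \<in> H" and lim: "(\<lambda>n. nm (\<lambda>z. vs n z - p z)) \<longlonglongrightarrow> 0"
    by blast
  have pV: "p \<in> V" using Vcl[OF vsV pH lim] .
  have pmin: "nm (\<lambda>z. u z - p z) \<le> d"
  proof (rule field_le_epsilon)
    fix e :: real assume e: "e > 0"
    have "eventually (\<lambda>n. nm (\<lambda>z. vs n z - p z) < e/2) sequentially"
      using order_tendstoD(2)[OF lim, of "e/2"] e by simp
    then obtain N where N: "\<And>n. n \<ge> N \<Longrightarrow> nm (\<lambda>z. vs n z - p z) < e/2"
      unfolding eventually_sequentially by blast
    obtain M :: nat where "inverse (real (Suc M)) < e/2" using reals_Archimedean[of "e/2"] e by auto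
    then have M: "1 / (real M + 1) < e/2" by (simp add: inverse_eq_divide add.commute)
    let ?n = "max N M"
    have "nm (\<lambda>z. u z - p z) \<le> nm (\<lambda>z. u z - vs ?n z) + nm (\<lambda>z. vs ?n z - p z)"
      using nm_tri3 u pH vsH by blast
    also have "\<dots> < (d + 1 / (real ?n + 1)) + e/2" using vsd N[of ?n] by (intro add_strict_mono) auto
    also have "1 / (real ?n + 1) \<le> 1 / (real M + 1)" by (simp add: frac_le)
    finally show "nm (\<lambda>z. u z - p z) \<le> d + e" using M by linarith
  qed
  have "ip (\<lambda>z. u z - p z) v = 0" if v: "v \<in> V" for v
  proof (rule min_orth)
    show "(\<lambda>z. u z - p z) \<in> H" using u pH by simp
    show "v \<in> H" using v VH by blast
    fix t
    have "(\<lambda>z. p z + t * v z) \<in> V" using pV v Vadd Vsc by blast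
    then have "d \<le> nm (\<lambda>z. u z - (p z + t * v z))" by (rule dle)
    then show "nm (\<lambda>z. u z - p z) \<le> nm (\<lambda>z. (u z - p z) - t * v z)" using pmin by (simp add: algebra_simps)
  qed
  then show ?thesis using pV by blast
qed

definition kk :: "complex \<Rightarrow> complex \<Rightarrow> complex" where
  "kk w = (SOME k. k \<in> H \<and> (\<forall>f\<in>H. f w = ip f k))"

lemma kk: "w \<in> disc \<Longrightarrow> kk w \<in> H \<and> (\<forall>f\<in>H. f w = ip f (kk w))"
proof -
  assume w: "w \<in> disc"
  have "\<exists>k. k \<in> H \<and> (\<forall>f\<in>H. f w = ip f k)" using PA w unfolding property_A_def rkhs_disc_def by blast
  then show ?thesis unfolding kk_def by (rule someI_ex)
qed

lemma kk_in[simp]: "w \<in> disc \<Longrightarrow> kk w \<in> H" using kk by blast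
lemma kk_rep: "w \<in> disc \<Longrightarrow> f \<in> H \<Longrightarrow> f w = ip f (kk w)" using kk by blast

lemma eval_bound: "w \<in> disc \<Longrightarrow> f \<in> H \<Longrightarrow> cmod (f w) \<le> nm f * nm (kk w)"
  using kk_rep cauchy_schwarz kk_in by metis

lemma zero_disc[simp]: "0 \<in> disc" unfolding disc_def by simp

lemma eval_conv:
  assumes sH: "\<And>n. s n \<in> H" and f: "f \<in> H" and lim: "(\<lambda>n. nm (\<lambda>z. s n z - f z)) \<longlonglongrightarrow> 0" and w: "w \<in> disc"
  shows "(\<lambda>n. s n w) \<longlonglongrightarrow> f w"
proof -
  have "(\<lambda>n. s n w - f w) \<longlonglongrightarrow> 0"
  proof (rule Lim_null_comparison)
    show "\<forall>\<^sub>F n in sequentially. norm (s n w - f w) \<le> nm (\<lambda>z. s n z - f z) * nm (kk w)"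
      using eval_bound[OF w, of "\<lambda>z. s n z - f z" for n] sH f by (intro always_eventually) auto
    show "(\<lambda>n. nm (\<lambda>z. s n z - f z) * nm (kk w)) \<longlonglongrightarrow> 0"
      using tendsto_mult_left_zero[OF lim] by simp
  qed
  then show ?thesis by (simp add: LIM_zero_iff)
qed

definition one :: "complex \<Rightarrow> complex" where "one = (\<lambda>z. if z \<in> disc then 1 else 0)"

lemma one_in[simp]: "one \<in> H"
proof -
  have uniq: "k = kk 0" if "k \<in> H" "\<forall>f\<in>H. f 0 = ip f k" for k
  proof -
    let ?d = "\<lambda>z. k z - kk 0 z"
    have dH: "?d \<in> H" using that by simp
    have "ip ?d ?d = ip ?d k - ip ?d (kk 0)" using dH that by (simp add: ip_diff_r)
    also have "\<dots> = 0" using that kk_rep[of 0 ?d] dH by simp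
    finally have "?d = (\<lambda>_. 0)" using ip_def0 dH by blast
    then show ?thesis by (auto simp: fun_eq_iff dest: fun_cong)
  qed
  have RK0: "RK H ip 0 = kk 0"
    unfolding RK_def
  proof (rule the_equality)
    show "kk 0 \<in> H \<and> (\<forall>f\<in>H. f 0 = ip f (kk 0))" using kk by simp
  qed (use uniq in blast)
  have "\<forall>w\<in>disc. kernel H ip w 0 = 1" using PA unfolding property_A_def by blast
  then have "\<forall>w\<in>disc. kk 0 w = 1" using RK0 unfolding kernel_def by simp
  then have "kk 0 = one" unfolding one_def using out0[of "kk 0"] by (auto simp: fun_eq_iff)
  then show ?thesis using kk_in[of 0] by simp
qed

lemma one_mul[simp]: "f \<in> H \<Longrightarrow> (\<lambda>z. one z * f z) = f"
  by (auto simp: fun_eq_iff one_def out0)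
lemma mul_one[simp]: "f \<in> H \<Longrightarrow> (\<lambda>z. f z * one z) = f"
  by (auto simp: fun_eq_iff one_def out0)

definition P :: "complex poly \<Rightarrow> complex \<Rightarrow> complex" where
  "P p = (\<lambda>z. if z \<in> disc then poly p z else 0)"

lemma P_pCons: "P (pCons a p) = (\<lambda>z. a * one z + z * P p z)"
  by (auto simp: fun_eq_iff P_def one_def)

lemma P_in[simp]: "P p \<in> H"
proof (induct p)
  case 0
  have "P 0 = (\<lambda>_. 0)" by (simp add: P_def fun_eq_iff)
  then show ?case by simp
next
  case (pCons a p)
  then show ?case unfolding P_pCons by simp
qed

lemma approx: "f \<in> H \<Longrightarrow> e > 0 \<Longrightarrow> \<exists>p. nm (\<lambda>z. f z - P p z) < e"
  using PA unfolding property_A_def hdiff_def dres_def P_def by blast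

lemma lsc:
  assumes hk: "\<And>k. hs k \<in> H" and h: "h \<in> H" and pw: "\<And>w. w \<in> disc \<Longrightarrow> (\<lambda>k. hs k w) \<longlonglongrightarrow> h w"
    and bd: "\<And>k. nm (hs k) \<le> m"
  shows "nm h \<le> m"
proof -
  have m0: "m \<ge> 0" using bd[of 0] nm_nonneg[OF hk[of 0]] by linarith
  define V where "V = {x\<in>H. (\<lambda>k. ip (hs k) x) \<longlonglongrightarrow> ip h x}"
  have "csub V"
    unfolding csub_def
  proof (intro conjI allI ballI impI)
    show "V \<subseteq> H" unfolding V_def by blast
    show "(\<lambda>_. 0) \<in> V" unfolding V_def using hk h by simp
    fix f g assume f: "f \<in> V" and g: "g \<in> V"
    then show "(\<lambda>z. f z + g z) \<in> V" unfolding V_def using hk h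
      by (auto simp: ip_add_r intro: tendsto_add)
  next
    fix f c assume f: "f \<in> V"
    then show "(\<lambda>z. c * f z) \<in> V" unfolding V_def using hk h
      by (auto simp: ip_scale_r intro: tendsto_mult_left)
  next
    fix s x assume a: "(\<forall>n. s n \<in> V) \<and> x \<in> H \<and> (\<lambda>n. nm (\<lambda>z. s n z - x z)) \<longlonglongrightarrow> 0"
    then have sV: "\<And>n. s n \<in> V" and x: "x \<in> H" and lim: "(\<lambda>n. nm (\<lambda>z. s n z - x z)) \<longlonglongrightarrow> 0" by auto
    have sH: "s n \<in> H" for n using sV unfolding V_def by blast
    have "(\<lambda>k. ip (hs k) x) \<longlonglongrightarrow> ip h x"
    proof (rule LIMSEQ_I)
      fix r :: real assume r: "r > 0"
      define K where "K = m + nm h + 1"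
      have K: "K > 0" using m0 h unfolding K_def by (simp add: add_nonneg_pos)
      have "eventually (\<lambda>n. nm (\<lambda>z. s n z - x z) < r / (3 * K)) sequentially"
        using order_tendstoD(2)[OF lim, of "r / (3*K)"] r K by simp
      then obtain n where n: "nm (\<lambda>z. s n z - x z) < r / (3 * K)" unfolding eventually_sequentially by blast
      have "(\<lambda>k. ip (hs k) (s n)) \<longlonglongrightarrow> ip h (s n)" using sV[of n] unfolding V_def by blast
      then obtain k0 where k0: "\<And>k. k \<ge> k0 \<Longrightarrow> norm (ip (hs k) (s n) - ip h (s n)) < r/3"
        using LIMSEQ_D[of _ _ "r/3"] r by (metis divide_pos_pos zero_less_numeral)
      show "\<exists>no. \<forall>k\<ge>no. norm (ip (hs k) x - ip h x) < r"
      proof (intro exI allI impI)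
        fix k assume k: "k \<ge> k0"
        let ?d = "\<lambda>z. s n z - x z"
        have dH: "?d \<in> H" using sH x by simp
        have eq: "ip (hs k) x - ip h x = (ip h (s n) - ip h x) - (ip (hs k) (s n) - ip (hs k) x) + (ip (hs k) (s n) - ip h (s n))"
          by simp
        have e1: "ip h (s n) - ip h x = ip h ?d" using h sH x by (simp add: ip_diff_r)
        have e2: "ip (hs k) (s n) - ip (hs k) x = ip (hs k) ?d" using hk sH x by (simp add: ip_diff_r)
        have b1: "cmod (ip h ?d) \<le> nm h * nm ?d" using cauchy_schwarz[OF h dH] .
        have b2: "cmod (ip (hs k) ?d) \<le> m * nm ?d"
          using cauchy_schwarz[OF hk[of k] dH] bd[of k] nm_nonneg[OF dH] by (meson mult_right_mono order_trans)
        have "nm h * nm ?d \<le> K * nm ?d" using dH m0 unfolding K_def by (intro mult_right_mono) auto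
        moreover have "m * nm ?d \<le> K * nm ?d" using dH h unfolding K_def by (intro mult_right_mono) auto
        moreover have "K * nm ?d \<le> r / 3" using n K by (simp add: field_simps)
        ultimately have "cmod (ip h ?d) \<le> r/3" "cmod (ip (hs k) ?d) \<le> r/3" using b1 b2 by linarith+
        moreover have "norm (ip (hs k) (s n) - ip h (s n)) < r/3" using k0[OF k] .
        ultimately have "cmod (ip h ?d) + cmod (ip (hs k) ?d) + norm (ip (hs k) (s n) - ip h (s n)) < r" by linarith
        moreover have "norm (ip (hs k) x - ip h x) \<le> cmod (ip h ?d) + cmod (ip (hs k) ?d) + norm (ip (hs k) (s n) - ip h (s n))"
          unfolding eq e1 e2 by (meson norm_diff_triangle_ineq norm_triangle_ineq order_trans norm_triangle_ineq4 add_mono order_refl)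
        ultimately show "norm (ip (hs k) x - ip h x) < r" by linarith
      qed
    qed
    then show "x \<in> V" unfolding V_def using x by blast
  qed
  from projection[OF this h] obtain p where pV: "p \<in> V" and orth: "\<And>v. v \<in> V \<Longrightarrow> ip (\<lambda>z. h z - p z) v = 0"
    by blast
  have pH: "p \<in> H" using pV unfolding V_def by blast
  have kV: "kk w \<in> V" if w: "w \<in> disc" for w
    unfolding V_def using w pw[OF w] kk_rep[OF w] hk h by auto
  have "h = p"
  proof
    fix w show "h w = p w"
    proof (cases "w \<in> disc")
      case True
      have "h w - p w = ip (\<lambda>z. h z - p z) (kk w)" using kk_rep[OF True, of "\<lambda>z. h z - p z"] h pH by simp
      also have "\<dots> = 0" using orth kV True by blast
      finally show ?thesis by simp
    next
      case False then show ?thesis using out0[OF h False] out0[OF pH False] by simp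
    qed
  qed
  then have hV: "h \<in> V" using pV by simp
  then have lim: "(\<lambda>k. ip (hs k) h) \<longlonglongrightarrow> ip h h" unfolding V_def by blast
  have "norm (ip h h) \<le> m * nm h"
  proof (rule Lim_norm_ubound[OF _ lim])
    show "\<forall>\<^sub>F k in sequentially. norm (ip (hs k) h) \<le> m * nm h"
      using cauchy_schwarz[OF hk h] bd h by (intro always_eventually) (meson mult_right_mono nm_nonneg order_trans)
  qed simp
  moreover have "norm (ip h h) = (nm h)^2" using h by (simp add: ip_self norm_power)
  ultimately have "(nm h)^2 \<le> m * nm h" by simp
  then have "nm h * nm h \<le> m * nm h" by (simp add: power2_eq_square)
  moreover have "nm h \<ge> 0" using h by simp
  ultimately show ?thesis using m0 by (cases "nm h = 0") (auto simp: mult_le_cancel_right)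
qed

definition dd :: "(complex \<Rightarrow> complex) \<Rightarrow> (complex \<Rightarrow> complex) \<Rightarrow> real" where
  "dd f g = (if f \<in> H \<and> g \<in> H then nm (\<lambda>z. f z - g z) else 0)"

lemma MS: "Metric_space H dd"
proof
  fix x y show "0 \<le> dd x y" unfolding dd_def by auto
next
  fix x y show "dd x y = dd y x" unfolding dd_def using nm_sym by auto
next
  fix x y assume "x \<in> H" "y \<in> H"
  then show "dd x y = 0 \<longleftrightarrow> x = y" unfolding dd_def
    by (auto simp: nm_zero_iff fun_eq_iff)
next
  fix x y z assume "x \<in> H" "y \<in> H" "z \<in> H"
  then show "dd x z \<le> dd x y + dd y z" unfolding dd_def using nm_tri3 by auto
qed

lemma nn_tendsto0: "(\<And>n. a n \<ge> (0::real)) \<Longrightarrow> (a \<longlonglongrightarrow> 0) \<longleftrightarrow> (\<forall>e>0. eventually (\<lambda>n. a n < e) sequentially)"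
  by (simp add: tendsto_iff dist_real_def)

lemma seminorm_bound:
  assumes p0: "\<And>f. f \<in> H \<Longrightarrow> \<phi> f \<ge> 0"
    and ptri: "\<And>f g. f \<in> H \<Longrightarrow> g \<in> H \<Longrightarrow> \<phi> (\<lambda>z. f z - g z) \<le> \<phi> f + \<phi> g"
    and psc: "\<And>f c. f \<in> H \<Longrightarrow> \<phi> (\<lambda>z. c * f z) \<le> cmod c * \<phi> f"
    and pcl: "\<And>s f m. (\<And>n. s n \<in> H) \<Longrightarrow> f \<in> H \<Longrightarrow> (\<lambda>n. nm (\<lambda>z. s n z - f z)) \<longlonglongrightarrow> 0
               \<Longrightarrow> (\<And>n. \<phi> (s n) \<le> m) \<Longrightarrow> \<phi> f \<le> m"
  shows "\<exists>C>0. \<forall>f\<in>H. \<phi> f \<le> C * nm f"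
proof -
  interpret MS: Metric_space H dd by (rule MS)
  have conv: "limitin MS.mtopology \<sigma> l sequentially \<longleftrightarrow> l \<in> H \<and> (\<lambda>n. nm (\<lambda>z. \<sigma> n z - l z)) \<longlonglongrightarrow> 0"
    if "\<And>n. \<sigma> n \<in> H" for \<sigma> :: "nat \<Rightarrow> complex \<Rightarrow> complex" and l
  proof (cases "l \<in> H")
    case False then show ?thesis by (simp add: MS.limitin_metric)
  next
    case True
    have eq: "(\<lambda>n. \<sigma> n \<in> H \<and> dd (\<sigma> n) l < e) = (\<lambda>n. nm (\<lambda>z. \<sigma> n z - l z) < e)" for e
      using True that by (simp add: dd_def)
    have "(\<lambda>n. nm (\<lambda>z. \<sigma> n z - l z)) \<longlonglongrightarrow> 0 \<longleftrightarrow> (\<forall>e>0. eventually (\<lambda>n. nm (\<lambda>z. \<sigma> n z - l z) < e) sequentially)"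
      by (rule nn_tendsto0) (use True that in simp)
    then show ?thesis unfolding MS.limitin_metric eq using True by simp
  qed
  have mc: "MS.mcomplete"
    unfolding MS.mcomplete_def MS.MCauchy_def
  proof (intro allI impI)
    fix \<sigma> :: "nat \<Rightarrow> complex \<Rightarrow> complex" assume a: "range \<sigma> \<subseteq> H \<and> (\<forall>\<epsilon>>0. \<exists>N. \<forall>n n'. N \<le> n \<longrightarrow> N \<le> n' \<longrightarrow> dd (\<sigma> n) (\<sigma> n') < \<epsilon>)"
    then have "range \<sigma> \<subseteq> H" by (rule conjunct1)
    then have sH: "\<And>n. \<sigma> n \<in> H" by blast
    have ch: "\<exists>N. \<forall>m\<ge>N. \<forall>n\<ge>N. nm (\<lambda>z. \<sigma> m z - \<sigma> n z) < e" if e: "e > 0" for e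
    proof -
      obtain N where N: "\<forall>n n'. N \<le> n \<longrightarrow> N \<le> n' \<longrightarrow> dd (\<sigma> n) (\<sigma> n') < e"
        using conjunct2[OF a] e by blast
      have "\<forall>m\<ge>N. \<forall>n\<ge>N. nm (\<lambda>z. \<sigma> m z - \<sigma> n z) < e"
      proof (intro allI impI)
        fix m n assume "m \<ge> N" "n \<ge> N"
        then have "dd (\<sigma> m) (\<sigma> n) < e" using N by blast
        then show "nm (\<lambda>z. \<sigma> m z - \<sigma> n z) < e" using sH[of m] sH[of n] by (simp add: dd_def)
      qed
      then show ?thesis by blast
    qed
    from complete'[of \<sigma>, OF sH ch] obtain f where "f \<in> H" "(\<lambda>n. nm (\<lambda>z. \<sigma> n z - f z)) \<longlonglongrightarrow> 0" by blast
    then show "\<exists>x. limitin MS.mtopology \<sigma> x sequentially" using conv[of \<sigma> f, OF sH] by blast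
  qed
  define E where "E m = {f\<in>H. \<phi> f \<le> real m}" for m :: nat
  have cl: "closedin MS.mtopology (E m)" for m
    unfolding MS.metric_closedin_iff_sequentially_closed
  proof (intro conjI allI impI)
    show "E m \<subseteq> H" unfolding E_def by blast
    fix \<sigma> :: "nat \<Rightarrow> complex \<Rightarrow> complex" and l assume a: "range \<sigma> \<subseteq> E m \<and> limitin MS.mtopology \<sigma> l sequentially"
    then have sH: "\<And>n. \<sigma> n \<in> H" and sm: "\<And>n. \<phi> (\<sigma> n) \<le> real m" unfolding E_def by auto
    then have "l \<in> H" "(\<lambda>n. nm (\<lambda>z. \<sigma> n z - l z)) \<longlonglongrightarrow> 0" using a conv[of \<sigma> l, OF sH] by auto
    then have "\<phi> l \<le> real m" using pcl[of \<sigma> l "real m", OF sH] sm by blast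
    then show "l \<in> E m" unfolding E_def using \<open>l \<in> H\<close> by blast
  qed
  have "\<exists>m. MS.mtopology interior_of (E m) \<noteq> {}"
  proof (rule ccontr)
    assume "\<not> ?thesis"
    then have "MS.mtopology interior_of \<Union>(range E) = {}"
      by (intro MS.metric_Baire_category_alt) (auto simp: mc cl)
    moreover have "\<Union>(range E) = H"
    proof
      show "\<Union>(range E) \<subseteq> H" unfolding E_def by blast
      show "H \<subseteq> \<Union>(range E)"
      proof
        fix f assume f: "f \<in> H"
        have "\<phi> f \<le> real (nat \<lceil>\<phi> f\<rceil>)" by (rule real_nat_ceiling_ge)
        then show "f \<in> \<Union>(range E)" unfolding E_def using f by blast
      qed
    qed
    ultimately show False using interior_of_topspace[of MS.mtopology] one_in by auto
  qed
  then obtain m x where "x \<in> MS.mtopology interior_of (E m)" by blast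
  then obtain T where T: "openin MS.mtopology T" "x \<in> T" "T \<subseteq> E m" unfolding interior_of_def by blast
  then obtain r where r: "r > 0" "MS.mball x r \<subseteq> T" unfolding MS.openin_mtopology by blast
  have xH: "x \<in> H" using T unfolding E_def by blast
  have B: "\<phi> y \<le> real m" if "y \<in> H" "nm (\<lambda>z. x z - y z) < r" for y
  proof -
    have "y \<in> MS.mball x r" using that xH by (simp add: dd_def)
    then show ?thesis using r T unfolding E_def by blast
  qed
  have Bx: "\<phi> x \<le> real m" using T unfolding E_def by blast
  define C where "C = 4 * real m / r + 1"
  have Cp: "C > 0" using r unfolding C_def by (simp add: add_nonneg_pos)
  have "\<phi> f \<le> C * nm f" if f: "f \<in> H" for f
  proof (cases "nm f = 0")
    case True
    then have f0: "f = (\<lambda>_. 0)" using f nm_zero_iff by blast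
    have "\<phi> (\<lambda>z. 0 * f z) \<le> cmod 0 * \<phi> f" using psc[OF f] .
    then have "\<phi> f \<le> 0" using f0 by simp
    then show ?thesis using True by simp
  next
    case False
    have nf: "nm f > 0" using False f by (simp add: order_less_le)
    define c where "c = r / (2 * nm f)"
    have c: "c > 0" using nf r unfolding c_def by simp
    define y where "y = (\<lambda>z. x z + of_real c * f z)"
    have yH: "y \<in> H" using xH f unfolding y_def by simp
    have "(\<lambda>z. x z - y z) = (\<lambda>z. (- of_real c) * f z)" unfolding y_def by auto
    then have "nm (\<lambda>z. x z - y z) = c * nm f" using nm_scale[OF f, of "- of_real c"] c by simp
    also have "\<dots> = r / 2" using nf unfolding c_def by simp
    finally have "\<phi> y \<le> real m" using B[OF yH] r by simp
    moreover have "(\<lambda>z. y z - x z) = (\<lambda>z. of_real c * f z)" unfolding y_def by auto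
    ultimately have "\<phi> (\<lambda>z. of_real c * f z) \<le> 2 * real m" using ptri[OF yH xH] Bx by simp
    moreover have "\<phi> f \<le> (1/c) * \<phi> (\<lambda>z. of_real c * f z)"
    proof -
      have "(\<lambda>z. of_real (1/c) * (of_real c * f z)) = f" using c by (auto simp: fun_eq_iff)
      then have "\<phi> f = \<phi> (\<lambda>z. of_real (1/c) * (\<lambda>z. of_real c * f z) z)" by simp
      also have "\<dots> \<le> cmod (of_real (1/c)) * \<phi> (\<lambda>z. of_real c * f z)" by (rule psc) (use f in simp)
      also have "cmod (of_real (1/c)) = 1/c" using c by (simp add: norm_divide)
      finally show ?thesis .
    qed
    ultimately have "\<phi> f \<le> (1/c) * (2 * real m)" using c by (smt (verit) divide_pos_pos mult_left_mono zero_less_one)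
    also have "\<dots> = 4 * real m / r * nm f" unfolding c_def using nf r by (simp add: field_simps)
    also have "\<dots> \<le> C * nm f" unfolding C_def using nf by (simp add: distrib_right)
    finally show ?thesis .
  qed
  then show ?thesis using Cp by blast
qed

lemma mul_pw:
  assumes sH: "\<And>n. s n \<in> H" and f: "f \<in> H" and lim: "(\<lambda>n. nm (\<lambda>z. s n z - f z)) \<longlonglongrightarrow> 0"
    and w: "w \<in> disc"
  shows "(\<lambda>n. g w * s n w) \<longlonglongrightarrow> g w * f w" "(\<lambda>n. s n w * g w) \<longlonglongrightarrow> f w * g w"
  using eval_conv[OF sH f lim w] by (auto intro: tendsto_mult_left tendsto_mult_right)

lemma mulb1: "f \<in> H \<Longrightarrow> \<exists>C>0. \<forall>g\<in>H. nm (\<lambda>z. f z * g z) \<le> C * nm g"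
proof -
  assume f: "f \<in> H"
  show ?thesis
  proof (rule seminorm_bound)
    fix g assume "g \<in> H" then show "0 \<le> nm (\<lambda>z. f z * g z)" using f by simp
  next
    fix g h assume g: "g \<in> H" and h: "h \<in> H"
    have "(\<lambda>z. f z * (g z - h z)) = (\<lambda>z. f z * g z - f z * h z)" by (simp add: algebra_simps)
    then show "nm (\<lambda>z. f z * (\<lambda>z. g z - h z) z) \<le> nm (\<lambda>z. f z * g z) + nm (\<lambda>z. f z * h z)"
      using nm_tri_diff[of "\<lambda>z. f z * g z" "\<lambda>z. f z * h z"] f g h by simp
  next
    fix g c assume g: "g \<in> H"
    have "(\<lambda>z. f z * (c * g z)) = (\<lambda>z. c * (f z * g z))" by (simp add: algebra_simps)
    then show "nm (\<lambda>z. f z * (\<lambda>z. c * g z) z) \<le> cmod c * nm (\<lambda>z. f z * g z)"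
      using nm_scale[of "\<lambda>z. f z * g z" c] f g by simp
  next
    fix s g m assume sH: "\<And>n. s n \<in> H" and g: "g \<in> H" and lim: "(\<lambda>n. nm (\<lambda>z. s n z - g z)) \<longlonglongrightarrow> 0"
      and b: "\<And>n. nm (\<lambda>z. f z * s n z) \<le> m"
    show "nm (\<lambda>z. f z * g z) \<le> m"
      by (rule lsc[of "\<lambda>n z. f z * s n z"]) (use sH f g b mul_pw(1)[OF sH g lim] in auto)
  qed
qed

definition opn :: "(complex \<Rightarrow> complex) \<Rightarrow> real" where
  "opn f = (SUP g\<in>{g\<in>H. nm g \<le> 1}. nm (\<lambda>z. f z * g z))"

lemma opn_bdd: "f \<in> H \<Longrightarrow> bdd_above ((\<lambda>g. nm (\<lambda>z. f z * g z)) ` {g\<in>H. nm g \<le> 1})"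
proof -
  assume f: "f \<in> H"
  obtain C where C: "C > 0" "\<forall>g\<in>H. nm (\<lambda>z. f z * g z) \<le> C * nm g" using mulb1[OF f] by blast
  show ?thesis unfolding bdd_above_def
  proof (intro exI ballI)
    fix x assume "x \<in> (\<lambda>g. nm (\<lambda>z. f z * g z)) ` {g\<in>H. nm g \<le> 1}"
    then obtain g where g: "g \<in> H" "nm g \<le> 1" "x = nm (\<lambda>z. f z * g z)" by blast
    have "C * nm g \<le> C" using C g by (simp add: mult_left_le)
    then show "x \<le> C" using C g by (metis order_trans)
  qed
qed

lemma opn_ne: "{g\<in>H. nm g \<le> 1} \<noteq> {}"
proof -
  have "(\<lambda>_. 0) \<in> {g\<in>H. nm g \<le> 1}" by simp
  then show ?thesis by blast
qed

lemma opn_upper: "f \<in> H \<Longrightarrow> g \<in> H \<Longrightarrow> nm g \<le> 1 \<Longrightarrow> nm (\<lambda>z. f z * g z) \<le> opn f"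
  unfolding opn_def by (rule cSUP_upper[OF _ opn_bdd]) auto

lemma opn_least: "(\<And>g. g \<in> H \<Longrightarrow> nm g \<le> 1 \<Longrightarrow> nm (\<lambda>z. f z * g z) \<le> M) \<Longrightarrow> opn f \<le> M"
  unfolding opn_def by (rule cSUP_least[OF opn_ne]) auto

lemma opn_bound: "f \<in> H \<Longrightarrow> g \<in> H \<Longrightarrow> nm (\<lambda>z. f z * g z) \<le> opn f * nm g"
proof -
  assume f: "f \<in> H" and g: "g \<in> H"
  show ?thesis
  proof (cases "nm g = 0")
    case True
    then have "g = (\<lambda>_. 0)" using g nm_zero_iff by blast
    then show ?thesis using True by simp
  next
    case False
    then have ng: "nm g > 0" using g by (simp add: order_less_le)
    let ?c = "complex_of_real (1 / nm g)"
    let ?g = "\<lambda>z. ?c * g z"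
    have gH: "?g \<in> H" by (rule scale_in[OF g])
    have "nm ?g = 1" using nm_scale[OF g, of ?c] ng by (simp add: norm_divide)
    then have "nm (\<lambda>z. f z * ?g z) \<le> opn f" using opn_upper[OF f gH] by simp
    moreover have "(\<lambda>z. f z * ?g z) = (\<lambda>z. ?c * (f z * g z))" by (simp add: algebra_simps)
    moreover have "nm (\<lambda>z. ?c * (f z * g z)) = nm (\<lambda>z. f z * g z) / nm g"
      using nm_scale[of "\<lambda>z. f z * g z" ?c] f g ng by (simp add: norm_divide)
    ultimately have "nm (\<lambda>z. f z * g z) / nm g \<le> opn f" by simp
    then show ?thesis using ng by (simp add: divide_le_eq)
  qed
qed

lemma opn_nonneg: "f \<in> H \<Longrightarrow> opn f \<ge> 0"
  using opn_upper[of f "\<lambda>_. 0"] by simp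

lemma mulb: "\<exists>C>0. \<forall>f\<in>H. opn f \<le> C * nm f"
proof (rule seminorm_bound)
  fix f assume "f \<in> H" then show "0 \<le> opn f" by (rule opn_nonneg)
next
  fix f h assume f: "f \<in> H" and h: "h \<in> H"
  show "opn (\<lambda>z. f z - h z) \<le> opn f + opn h"
  proof (rule opn_least)
    fix g assume g: "g \<in> H" "nm g \<le> 1"
    have "(\<lambda>z. (f z - h z) * g z) = (\<lambda>z. f z * g z - h z * g z)" by (simp add: algebra_simps)
    then have "nm (\<lambda>z. (f z - h z) * g z) \<le> nm (\<lambda>z. f z * g z) + nm (\<lambda>z. h z * g z)"
      using nm_tri_diff[of "\<lambda>z. f z * g z" "\<lambda>z. h z * g z"] f g h by simp
    also have "\<dots> \<le> opn f + opn h" using opn_upper f h g by (meson add_mono)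
    finally show "nm (\<lambda>z. (\<lambda>z. f z - h z) z * g z) \<le> opn f + opn h" by simp
  qed
next
  fix f c assume f: "f \<in> H"
  show "opn (\<lambda>z. c * f z) \<le> cmod c * opn f"
  proof (rule opn_least)
    fix g assume g: "g \<in> H" "nm g \<le> 1"
    have "(\<lambda>z. (c * f z) * g z) = (\<lambda>z. c * (f z * g z))" by (simp add: algebra_simps)
    then have "nm (\<lambda>z. (c * f z) * g z) = cmod c * nm (\<lambda>z. f z * g z)"
      using nm_scale[of "\<lambda>z. f z * g z" c] f g by simp
    also have "\<dots> \<le> cmod c * opn f" using opn_upper[OF f g] by (simp add: mult_left_mono)
    finally show "nm (\<lambda>z. (\<lambda>z. c * f z) z * g z) \<le> cmod c * opn f" by simp
  qed
next
  fix s f m assume sH: "\<And>n. s n \<in> H" and f: "f \<in> H" and lim: "(\<lambda>n. nm (\<lambda>z. s n z - f z)) \<longlonglongrightarrow> 0"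
    and b: "\<And>n. opn (s n) \<le> m"
  have m0: "m \<ge> 0" using b[of 0] opn_nonneg[OF sH[of 0]] by linarith
  show "opn f \<le> m"
  proof (rule opn_least)
    fix g assume g: "g \<in> H" "nm g \<le> 1"
    have bb: "nm (\<lambda>z. s n z * g z) \<le> m" for n
    proof -
      have "nm (\<lambda>z. s n z * g z) \<le> opn (s n) * nm g" using opn_bound[OF sH g(1)] .
      also have "\<dots> \<le> m * 1" using b[of n] g opn_nonneg[OF sH[of n]] m0 by (intro mult_mono) auto
      finally show ?thesis by simp
    qed
    show "nm (\<lambda>z. f z * g z) \<le> m"
      by (rule lsc[of "\<lambda>n z. s n z * g z"]) (use sH f g bb mul_pw(2)[OF sH f lim] in auto)
  qed
qed

definition CM :: real where
  "CM = (SOME C. C \<ge> 1 \<and> (\<forall>f\<in>H. \<forall>g\<in>H. nm (\<lambda>z. f z * g z) \<le> C * nm f * nm g))"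

lemma CM: "CM \<ge> 1 \<and> (\<forall>f\<in>H. \<forall>g\<in>H. nm (\<lambda>z. f z * g z) \<le> CM * nm f * nm g)"
proof -
  obtain C where C: "C > 0" "\<forall>f\<in>H. opn f \<le> C * nm f" using mulb by blast
  have "max C 1 \<ge> 1 \<and> (\<forall>f\<in>H. \<forall>g\<in>H. nm (\<lambda>z. f z * g z) \<le> max C 1 * nm f * nm g)"
  proof (intro conjI ballI)
    fix f g assume f: "f \<in> H" and g: "g \<in> H"
    have "nm (\<lambda>z. f z * g z) \<le> opn f * nm g" by (rule opn_bound[OF f g])
    also have "\<dots> \<le> (C * nm f) * nm g" using C f g by (intro mult_right_mono) auto
    also have "\<dots> \<le> max C 1 * nm f * nm g" using f g by (intro mult_right_mono) auto
    finally show "nm (\<lambda>z. f z * g z) \<le> max C 1 * nm f * nm g" .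
  qed simp
  then show ?thesis unfolding CM_def by (rule someI)
qed

lemma CM1: "CM \<ge> 1" using CM by blast
lemma CM0: "CM > 0" using CM1 by simp
lemma mul_bound: "f \<in> H \<Longrightarrow> g \<in> H \<Longrightarrow> nm (\<lambda>z. f z * g z) \<le> CM * nm f * nm g" using CM by blast

primrec pw :: "(complex \<Rightarrow> complex) \<Rightarrow> nat \<Rightarrow> complex \<Rightarrow> complex" where
  "pw f 0 = one"
| "pw f (Suc n) = (\<lambda>z. f z * pw f n z)"

lemma pw_in[simp]: "f \<in> H \<Longrightarrow> pw f n \<in> H"
  by (induct n) auto

lemma pw_val: "w \<in> disc \<Longrightarrow> pw f n w = f w ^ n"
  by (induct n) (auto simp: one_def)

lemma pw_bound: "f \<in> H \<Longrightarrow> nm (pw f (Suc n)) \<le> CM ^ n * nm f ^ Suc n"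
proof (induct n)
  case 0
  then show ?case using one_mul[of f] by (simp add: mult.commute)
next
  case (Suc n)
  have "nm (pw f (Suc (Suc n))) \<le> CM * nm f * nm (pw f (Suc n))"
    using mul_bound[of f "pw f (Suc n)"] Suc by simp
  also have "\<dots> \<le> CM * nm f * (CM ^ n * nm f ^ Suc n)"
    using Suc CM0 by (intro mult_left_mono) auto
  also have "\<dots> = CM ^ Suc n * nm f ^ Suc (Suc n)" by (simp add: algebra_simps)
  finally show ?case .
qed

lemma sup_bound: "w \<in> disc \<Longrightarrow> f \<in> H \<Longrightarrow> cmod (f w) \<le> CM * nm f"
proof (rule ccontr)
  assume w: "w \<in> disc" and f: "f \<in> H" and c: "\<not> cmod (f w) \<le> CM * nm f"
  define K where "K = nm (kk w)"
  have K0: "K \<ge> 0" using w unfolding K_def by simp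
  have nf: "nm f > 0"
  proof (rule ccontr)
    assume "\<not> nm f > 0"
    then have "nm f = 0" using f nm_nonneg[OF f] by linarith
    then have "f = (\<lambda>_. 0)" using f nm_zero_iff by blast
    then show False using c by simp
  qed
  define q where "q = cmod (f w) / (CM * nm f)"
  have q1: "q > 1" using c nf CM0 unfolding q_def by simp
  have fwq: "cmod (f w) = q * (CM * nm f)" using nf CM0 unfolding q_def by simp
  have bnd: "q ^ Suc n \<le> K / CM" for n
  proof -
    have "cmod (f w) ^ Suc n = cmod (pw f (Suc n) w)" unfolding pw_val[OF w] by (simp only: norm_power)
    also have "\<dots> \<le> nm (pw f (Suc n)) * K" unfolding K_def by (rule eval_bound[OF w pw_in[OF f]])
    also have "\<dots> \<le> CM ^ n * nm f ^ Suc n * K" using pw_bound[OF f, of n] K0 by (intro mult_right_mono) auto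
    finally have "(q * (CM * nm f)) ^ Suc n \<le> CM ^ n * nm f ^ Suc n * K" unfolding fwq .
    then have "q ^ Suc n * CM * (CM ^ n * nm f ^ Suc n) \<le> K * (CM ^ n * nm f ^ Suc n)"
      by (simp add: power_mult_distrib algebra_simps)
    moreover have "CM ^ n * nm f ^ Suc n > 0" using nf CM0 by simp
    ultimately have "q ^ Suc n * CM \<le> K" by (simp add: mult_le_cancel_right)
    then show ?thesis using CM0 by (simp add: le_divide_eq)
  qed
  obtain n where "K / CM < q ^ n" using real_arch_pow[OF q1] by blast
  moreover have "q ^ n \<le> q ^ Suc n" using q1 by simp
  ultimately show False using bnd[of n] by linarith
qed

lemma tri3: "cmod (a + b + c) \<le> cmod a + cmod b + cmod (c::complex)"
  using norm_triangle_ineq[of "a+b" c] norm_triangle_ineq[of a b] by linarith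

lemma uc: "f \<in> H \<Longrightarrow> uniformly_continuous_on disc f"
  unfolding uniformly_continuous_on_def
proof (intro allI impI)
  fix e :: real assume f: "f \<in> H" and e: "e > 0"
  have e3: "e / (3 * CM) > 0" using e CM0 by simp
  obtain p where p: "nm (\<lambda>z. f z - P p z) < e / (3 * CM)" using approx[OF f e3] by blast
  have close: "cmod (f z - poly p z) < e / 3" if z: "z \<in> disc" for z
  proof -
    have "cmod (f z - poly p z) = cmod ((\<lambda>z. f z - P p z) z)" using z by (simp add: P_def)
    also have "\<dots> \<le> CM * nm (\<lambda>z. f z - P p z)" using sup_bound[OF z, of "\<lambda>z. f z - P p z"] f by simp
    also have "\<dots> < CM * (e / (3 * CM))" using p CM0 by (intro mult_strict_left_mono) auto
    also have "\<dots> = e / 3" using CM0 by simp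
    finally show ?thesis .
  qed
  have "uniformly_continuous_on (cball 0 1) (poly p)"
    by (intro compact_uniformly_continuous) (auto intro: continuous_intros)
  moreover have e3': "e / 3 > 0" using e by simp
  ultimately obtain d where d: "d > 0" "\<forall>x\<in>cball 0 1. \<forall>x'\<in>cball 0 1. dist x' x < d \<longrightarrow> dist (poly p x') (poly p x) < e/3"
    unfolding uniformly_continuous_on_def by blast
  show "\<exists>d>0. \<forall>x\<in>disc. \<forall>x'\<in>disc. dist x' x < d \<longrightarrow> dist (f x') (f x) < e"
  proof (intro exI conjI ballI impI)
    show "d > 0" by (rule d(1))
    fix x x' assume x: "x \<in> disc" and x': "x' \<in> disc" and dx: "dist x' x < d"
    have xc: "x \<in> cball 0 1" "x' \<in> cball 0 1" using x x' unfolding disc_def by auto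
    have "f x' - f x = (f x' - poly p x') + (poly p x' - poly p x) + (poly p x - f x)" by simp
    then have "dist (f x') (f x) \<le> cmod (f x' - poly p x') + cmod (poly p x' - poly p x) + cmod (poly p x - f x)"
      unfolding dist_norm using tri3 by metis
    moreover have "cmod (poly p x' - poly p x) < e/3" using d(2) xc dx unfolding dist_norm by blast
    moreover have "cmod (poly p x - f x) < e/3" using close[OF x] by (simp add: norm_minus_commute)
    ultimately show "dist (f x') (f x) < e" using close[OF x'] by linarith
  qed
qed

lemma closure_disc: "closure disc = cball 0 1" unfolding disc_def by simp

lemma ext_ex: "f \<in> H \<Longrightarrow> \<exists>g. continuous_on (cball 0 1) g \<and> (\<forall>z\<in>disc. g z = f z)"
proof -
  assume f: "f \<in> H"
  obtain g where "uniformly_continuous_on (closure disc) g" "\<And>x. x \<in> disc \<Longrightarrow> f x = g x"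
    using uniformly_continuous_on_extension_on_closure[OF uc[OF f]] by metis
  then show ?thesis unfolding closure_disc using uniformly_continuous_imp_continuous by metis
qed

definition ext :: "(complex \<Rightarrow> complex) \<Rightarrow> complex \<Rightarrow> complex" where
  "ext f = (SOME g. continuous_on (cball 0 1) g \<and> (\<forall>z\<in>disc. g z = f z))"

lemma ext_prop: "f \<in> H \<Longrightarrow> continuous_on (cball 0 1) (ext f) \<and> (\<forall>z\<in>disc. ext f z = f z)"
proof -
  assume f: "f \<in> H"
  show ?thesis unfolding ext_def using ext_ex[OF f] by (rule someI_ex)
qed

lemma ext_cont: "f \<in> H \<Longrightarrow> continuous_on (cball 0 1) (ext f)" using ext_prop by blast
lemma ext_disc: "f \<in> H \<Longrightarrow> z \<in> disc \<Longrightarrow> ext f z = f z" using ext_prop by blast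

lemma seq_disc: "l \<in> cball 0 1 \<Longrightarrow> \<exists>x. (\<forall>n. x n \<in> disc) \<and> x \<longlonglongrightarrow> l"
proof -
  assume "l \<in> cball 0 1"
  then have "l \<in> closure disc" using closure_disc by simp
  then show ?thesis by (simp only: closure_sequential)
qed

lemma cont_lim: "continuous_on (cball 0 1) (g :: complex \<Rightarrow> complex) \<Longrightarrow> (\<And>n. x n \<in> disc) \<Longrightarrow> x \<longlonglongrightarrow> l \<Longrightarrow> l \<in> cball 0 1
   \<Longrightarrow> (\<lambda>n. g (x n)) \<longlonglongrightarrow> g l"
proof -
  assume c: "continuous_on (cball 0 1) g" and x: "\<And>n. x n \<in> disc" and lim: "x \<longlonglongrightarrow> l" and l: "l \<in> cball 0 1"
  have "x n \<in> cball 0 1" for n using x[of n] unfolding disc_def by auto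
  then have "(g \<circ> x) \<longlonglongrightarrow> g l" using c lim l unfolding continuous_on_sequentially by blast
  then show ?thesis by (simp add: comp_def)
qed

lemma uniq_ext: "continuous_on (cball 0 1) (g1 :: complex \<Rightarrow> complex) \<Longrightarrow> continuous_on (cball 0 1) g2 \<Longrightarrow> (\<And>z. z \<in> disc \<Longrightarrow> g1 z = g2 z)
   \<Longrightarrow> l \<in> cball 0 1 \<Longrightarrow> g1 l = g2 l"
proof -
  assume c1: "continuous_on (cball 0 1) g1" and c2: "continuous_on (cball 0 1) g2"
    and eq: "\<And>z. z \<in> disc \<Longrightarrow> g1 z = g2 z" and l: "l \<in> cball 0 1"
  obtain x where x1: "\<forall>n. x n \<in> disc" and x2: "x \<longlonglongrightarrow> l" using seq_disc[OF l] by blast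
  have A: "(\<lambda>n. g1 (x n)) \<longlonglongrightarrow> g1 l" by (rule cont_lim[OF c1]) (use x1 x2 l in auto)
  have B: "(\<lambda>n. g2 (x n)) \<longlonglongrightarrow> g2 l" by (rule cont_lim[OF c2]) (use x1 x2 l in auto)
  have "(\<lambda>n. g1 (x n)) = (\<lambda>n. g2 (x n))"
  proof (rule ext)
    fix n show "g1 (x n) = g2 (x n)" using eq x1 by blast
  qed
  then have A': "(\<lambda>n. g2 (x n)) \<longlonglongrightarrow> g1 l" using A by simp
  show ?thesis by (rule LIMSEQ_unique[OF A' B])
qed

lemma ext_eqI: "f \<in> H \<Longrightarrow> continuous_on (cball 0 1) g \<Longrightarrow> (\<And>z. z \<in> disc \<Longrightarrow> g z = f z) \<Longrightarrow> l \<in> cball 0 1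
   \<Longrightarrow> ext f l = g l"
proof -
  assume f: "f \<in> H" and c: "continuous_on (cball 0 1) g" and e: "\<And>z. z \<in> disc \<Longrightarrow> g z = f z" and l: "l \<in> cball 0 1"
  have "ext f z = g z" if "z \<in> disc" for z using ext_disc[OF f that] e[OF that] by simp
  then show ?thesis using uniq_ext[OF ext_cont[OF f] c _ l] by blast
qed

lemma ext_bound: "f \<in> H \<Longrightarrow> l \<in> cball 0 1 \<Longrightarrow> cmod (ext f l) \<le> CM * nm f"
proof -
  assume f: "f \<in> H" and l: "l \<in> cball 0 1"
  obtain x where x1: "\<forall>n. x n \<in> disc" and x2: "x \<longlonglongrightarrow> l" using seq_disc[OF l] by blast
  have lim: "(\<lambda>n. ext f (x n)) \<longlonglongrightarrow> ext f l" by (rule cont_lim[OF ext_cont[OF f]]) (use x1 x2 l in auto)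
  show ?thesis
  proof (rule Lim_norm_ubound[OF _ lim])
    show "\<forall>\<^sub>F n in sequentially. norm (ext f (x n)) \<le> CM * nm f"
    proof (intro always_eventually allI)
      fix n
      have "ext f (x n) = f (x n)" using ext_disc[OF f] x1 by blast
      then show "norm (ext f (x n)) \<le> CM * nm f" using sup_bound[OF _ f] x1 by simp
    qed
  qed simp
qed

lemma ext_one: "l \<in> cball 0 1 \<Longrightarrow> ext one l = 1"
  by (rule ext_eqI[OF one_in]) (auto simp: one_def)

lemma ext_mul: "f \<in> H \<Longrightarrow> g \<in> H \<Longrightarrow> l \<in> cball 0 1 \<Longrightarrow> ext (\<lambda>z. f z * g z) l = ext f l * ext g l"
  by (rule ext_eqI) (auto simp: ext_disc intro!: continuous_on_mult ext_cont)

lemma ext_diff: "f \<in> H \<Longrightarrow> g \<in> H \<Longrightarrow> l \<in> cball 0 1 \<Longrightarrow> ext (\<lambda>z. f z - g z) l = ext f l - ext g l"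
  by (rule ext_eqI) (auto simp: ext_disc intro!: continuous_on_diff ext_cont)

lemma ext_P: "l \<in> cball 0 1 \<Longrightarrow> ext (P p) l = poly p l"
  by (rule ext_eqI[OF P_in]) (auto simp: P_def intro: continuous_intros)

lemma sum_in: "finite A \<Longrightarrow> (\<And>k. k \<in> A \<Longrightarrow> F k \<in> H) \<Longrightarrow>
   (\<lambda>z. \<Sum>k\<in>A. F k z) \<in> H \<and> nm (\<lambda>z. \<Sum>k\<in>A. F k z) \<le> (\<Sum>k\<in>A. nm (F k))"
proof (induct A rule: finite_induct)
  case empty
  then show ?case by simp
next
  case (insert a A)
  have aH: "F a \<in> H" using insert by simp
  have IH: "(\<lambda>z. \<Sum>k\<in>A. F k z) \<in> H" "nm (\<lambda>z. \<Sum>k\<in>A. F k z) \<le> (\<Sum>k\<in>A. nm (F k))" using insert by auto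
  have eq: "(\<lambda>z. \<Sum>k\<in>insert a A. F k z) = (\<lambda>z. F a z + (\<lambda>z. \<Sum>k\<in>A. F k z) z)" using insert by simp
  show ?case unfolding eq
  proof
    show "(\<lambda>z. F a z + (\<lambda>z. \<Sum>k\<in>A. F k z) z) \<in> H" using aH IH by simp
    have "nm (\<lambda>z. F a z + (\<lambda>z. \<Sum>k\<in>A. F k z) z) \<le> nm (F a) + nm (\<lambda>z. \<Sum>k\<in>A. F k z)"
      by (rule nm_tri[OF aH IH(1)])
    also have "\<dots> \<le> nm (F a) + (\<Sum>k\<in>A. nm (F k))" using IH(2) by simp
    also have "\<dots> = (\<Sum>k\<in>insert a A. nm (F k))" using insert by simp
    finally show "nm (\<lambda>z. F a z + (\<lambda>z. \<Sum>k\<in>A. F k z) z) \<le> (\<Sum>k\<in>insert a A. nm (F k))" .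
  qed
qed

lemma nm_zero_le: "f \<in> H \<Longrightarrow> nm f \<le> 0 \<Longrightarrow> f = (\<lambda>_. 0)"
  using nm_nonneg[of f] nm_zero_iff[of f] by linarith

lemma neumann:
  assumes x: "x \<in> H" and small: "CM * nm x \<le> 1/2"
  shows "\<exists>y\<in>H. (\<lambda>z. (one z - x z) * y z) = one \<and> nm y \<le> 2 * nm one"
proof -
  define B where "B = nm one + 1"
  have B: "B > 0" unfolding B_def using one_in nm_nonneg[of one] by linarith
  have nx: "nm x \<le> 1/2" using small CM1 x nm_nonneg[OF x]
    by (metis dual_order.trans mult_le_cancel_right1 not_less)
  have pb: "nm (pw x k) \<le> B * (1/2)^k" for k
  proof (cases k)
    case 0 then show ?thesis unfolding B_def by simp
  next
    case (Suc j)
    have "nm (pw x (Suc j)) \<le> CM ^ j * nm x ^ Suc j" by (rule pw_bound[OF x])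
    also have "\<dots> = (CM * nm x) ^ j * nm x" by (simp add: power_mult_distrib algebra_simps)
    also have "\<dots> \<le> (1/2)^j * (1/2)"
      using small nx x CM0 by (intro mult_mono power_mono) auto
    also have "\<dots> = (1/2)^Suc j" by simp
    also have "\<dots> \<le> B * (1/2)^Suc j" unfolding B_def using one_in nm_nonneg[of one]
      by (simp add: mult_le_cancel_right1)
    finally show ?thesis using Suc by simp
  qed
  define S where "S n = (\<lambda>z. \<Sum>k\<in>{0..<n}. pw x k z)" for n
  have SH: "S n \<in> H" for n unfolding S_def using sum_in[of "{0..<n}" "pw x"] x by simp
  have sdiff: "nm (\<lambda>z. S n z - S m z) \<le> (\<Sum>k\<in>{m..<n}. B * (1/2)^k)" if mn: "m \<le> n" for m n
  proof -
    have "(\<lambda>z. S n z - S m z) = (\<lambda>z. \<Sum>k\<in>{m..<n}. pw x k z)"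
      unfolding S_def using sum_diff_nat_ivl[of 0 m n] mn by auto
    moreover have "nm (\<lambda>z. \<Sum>k\<in>{m..<n}. pw x k z) \<le> (\<Sum>k\<in>{m..<n}. nm (pw x k))"
      using sum_in[of "{m..<n}" "pw x"] x by simp
    moreover have "(\<Sum>k\<in>{m..<n}. nm (pw x k)) \<le> (\<Sum>k\<in>{m..<n}. B * (1/2)^k)"
      by (rule sum_mono) (rule pb)
    ultimately show ?thesis by simp
  qed
  have summ: "summable (\<lambda>k. B * (1/2::real)^k)" by (intro summable_mult summable_geometric) simp
  have cauchy: "\<exists>N. \<forall>m\<ge>N. \<forall>n\<ge>N. nm (\<lambda>z. S m z - S n z) < e" if e: "e > 0" for e
  proof -
    obtain N where N: "\<forall>m\<ge>N. \<forall>n. norm (\<Sum>k\<in>{m..<n}. B * (1/2::real)^k) < e"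
      using summ e unfolding summable_Cauchy by blast
    have "nm (\<lambda>z. S m z - S n z) < e" if "m \<ge> N" "n \<ge> N" for m n
    proof (cases "n \<le> m")
      case True
      have "nm (\<lambda>z. S m z - S n z) \<le> (\<Sum>k\<in>{n..<m}. B * (1/2)^k)" using sdiff[OF True] .
      also have "\<dots> < e" using N that by (simp add: abs_less_iff)
      finally show ?thesis .
    next
      case False
      then have le: "m \<le> n" by simp
      have "nm (\<lambda>z. S m z - S n z) = nm (\<lambda>z. S n z - S m z)" using nm_sym SH by blast
      also have "\<dots> \<le> (\<Sum>k\<in>{m..<n}. B * (1/2)^k)" using sdiff[OF le] .
      also have "\<dots> < e" using N that by (simp add: abs_less_iff)
      finally show ?thesis .
    qed
    then show ?thesis by blast
  qed
  from complete'[of S, OF SH cauchy] obtain y where yH: "y \<in> H" and lim: "(\<lambda>n. nm (\<lambda>z. S n z - y z)) \<longlonglongrightarrow> 0"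
    by blast
  have tele: "(\<lambda>z. (one z - x z) * S n z) = (\<lambda>z. one z - pw x n z)" for n
  proof (induct n)
    case 0
    show ?case by (auto simp: S_def fun_eq_iff)
  next
    case (Suc n)
    show ?case
    proof
      fix z
      have e: "(one z - x z) * S n z = one z - pw x n z" using Suc by meson
      have "(one z - x z) * S (Suc n) z = (one z - x z) * S n z + (one z - x z) * pw x n z"
        unfolding S_def by (simp add: algebra_simps)
      also have "\<dots> = one z - pw x n z + (one z - x z) * pw x n z" using e by simp
      also have "\<dots> = one z - pw x (Suc n) z"
      proof (cases "z \<in> disc")
        case True then show ?thesis by (simp add: one_def algebra_simps)
      next
        case False
        have "pw x n z = 0" using out0[OF pw_in[OF x] False] .
        moreover have "x z = 0" using out0[OF x False] .
        ultimately show ?thesis using False by (simp add: one_def)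
      qed
      finally show "(one z - x z) * S (Suc n) z = one z - pw x (Suc n) z" .
    qed
  qed
  define D where "D = (\<lambda>z. (one z - x z) * y z - one z)"
  have omx: "(\<lambda>z. one z - x z) \<in> H" using x by simp
  have DH: "D \<in> H" unfolding D_def using omx yH by simp
  have Dn: "nm D \<le> CM * nm (\<lambda>z. one z - x z) * nm (\<lambda>z. y z - S n z) + B * (1/2)^n" for n
  proof -
    have "D = (\<lambda>z. (one z - x z) * (y z - S n z) - pw x n z)"
    proof
      fix z
      have "(one z - x z) * S n z = one z - pw x n z" using tele[of n] by meson
      then show "D z = (one z - x z) * (y z - S n z) - pw x n z" unfolding D_def by (simp add: algebra_simps)
    qed
    then have "nm D = nm (\<lambda>z. (\<lambda>z. (one z - x z) * (y z - S n z)) z - pw x n z)" by simp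
    also have "\<dots> \<le> nm (\<lambda>z. (one z - x z) * (y z - S n z)) + nm (pw x n)"
      by (rule nm_tri_diff) (use x yH SH in simp_all)
    also have "nm (\<lambda>z. (one z - x z) * (y z - S n z)) \<le> CM * nm (\<lambda>z. one z - x z) * nm (\<lambda>z. y z - S n z)"
      using mul_bound[OF omx, of "\<lambda>z. y z - S n z"] yH SH by simp
    finally show ?thesis using pb[of n] by linarith
  qed
  have lim2: "(\<lambda>n. CM * nm (\<lambda>z. one z - x z) * nm (\<lambda>z. y z - S n z) + B * (1/2)^n) \<longlonglongrightarrow> CM * nm (\<lambda>z. one z - x z) * 0 + B * 0"
  proof (intro tendsto_add tendsto_mult tendsto_const LIMSEQ_realpow_zero)
    have "(\<lambda>n. nm (\<lambda>z. y z - S n z)) = (\<lambda>n. nm (\<lambda>z. S n z - y z))" using nm_sym yH SH by blast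
    then show "(\<lambda>n. nm (\<lambda>z. y z - S n z)) \<longlonglongrightarrow> 0" using lim by simp
  qed simp_all
  have "nm D \<le> 0"
    using lim2 by (intro tendsto_lowerbound[of _ _ sequentially]) (use Dn in auto)
  then have D0: "D = (\<lambda>_. 0)" using nm_zero_le[OF DH] by blast
  have inv: "(\<lambda>z. (one z - x z) * y z) = one"
  proof
    fix z show "(one z - x z) * y z = one z" using fun_cong[OF D0, of z] unfolding D_def by simp
  qed
  have "y = (\<lambda>z. one z + x z * y z)"
  proof
    fix z
    have "y z = one z * y z" using fun_cong[OF one_mul[OF yH], of z] by simp
    also have "\<dots> = (one z - x z) * y z + x z * y z" by (simp add: algebra_simps)
    also have "\<dots> = one z + x z * y z" using fun_cong[OF inv, of z] by simp
    finally show "y z = one z + x z * y z" .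
  qed
  then have "nm y = nm (\<lambda>z. one z + (\<lambda>z. x z * y z) z)" by simp
  also have "\<dots> \<le> nm one + nm (\<lambda>z. x z * y z)" by (rule nm_tri) (use x yH in simp_all)
  also have "nm (\<lambda>z. x z * y z) \<le> CM * nm x * nm y" by (rule mul_bound[OF x yH])
  also have "CM * nm x * nm y \<le> (1/2) * nm y" using small yH by (intro mult_right_mono) auto
  finally have "nm y \<le> 2 * nm one" by linarith
  then show ?thesis using yH inv by blast
qed

lemma cis_parts:
  assumes "closed_inv_subspace H ip M"
  shows "M \<subseteq> H" "(\<lambda>_. 0) \<in> M" "\<And>f g. f \<in> M \<Longrightarrow> g \<in> M \<Longrightarrow> (\<lambda>z. f z + g z) \<in> M"
    "\<And>f c. f \<in> M \<Longrightarrow> (\<lambda>z. c * f z) \<in> M"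
    "\<And>s f. (\<And>n. s n \<in> M) \<Longrightarrow> f \<in> H \<Longrightarrow> (\<lambda>n. nm (\<lambda>z. s n z - f z)) \<longlonglongrightarrow> 0 \<Longrightarrow> f \<in> M"
    "\<And>f. f \<in> M \<Longrightarrow> (\<lambda>z. z * f z) \<in> M"
  using assms unfolding closed_inv_subspace_def hdiff_def Mz_def by blast+

lemma cis_diff: "closed_inv_subspace H ip M \<Longrightarrow> f \<in> M \<Longrightarrow> g \<in> M \<Longrightarrow> (\<lambda>z. f z - g z) \<in> M"
proof -
  assume M: "closed_inv_subspace H ip M" and f: "f \<in> M" and g: "g \<in> M"
  have "(\<lambda>z. (-1) * g z) \<in> M" using cis_parts(4)[OF M g] .
  then have "(\<lambda>z. f z + (\<lambda>z. (-1) * g z) z) \<in> M" using cis_parts(3)[OF M f] by blast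
  then show ?thesis by simp
qed

lemma cis_ideal:
  assumes M: "closed_inv_subspace H ip M" and f: "f \<in> M" and g: "g \<in> H"
  shows "(\<lambda>z. f z * g z) \<in> M"
proof -
  have fH: "f \<in> H" using cis_parts(1)[OF M] f by blast
  have polyM: "(\<lambda>z. f z * P p z) \<in> M" for p
  proof (induct p)
    case 0
    have "(\<lambda>z. f z * P 0 z) = (\<lambda>_. 0)" by (simp add: P_def fun_eq_iff)
    then show ?case using cis_parts(2)[OF M] by simp
  next
    case (pCons a p)
    have "(\<lambda>z. f z * P (pCons a p) z) = (\<lambda>z. a * f z + z * (f z * P p z))"
    proof
      fix z
      have "f z * one z = f z" using fun_cong[OF mul_one[OF fH], of z] by simp
      then show "f z * P (pCons a p) z = a * f z + z * (f z * P p z)"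
        unfolding P_pCons by (simp add: algebra_simps)
    qed
    moreover have A: "(\<lambda>z. a * f z) \<in> M" by (rule cis_parts(4)[OF M f])
    moreover have B: "(\<lambda>z. z * (f z * P p z)) \<in> M" by (rule cis_parts(6)[OF M pCons(2)])
    moreover have "(\<lambda>z. a * f z + z * (f z * P p z)) \<in> M" using cis_parts(3)[OF M A B] by simp
    ultimately show ?case by simp
  qed
  have "\<exists>p. nm (\<lambda>z. g z - P p z) < inverse (real (Suc n))" for n
    using approx[OF g, of "inverse (real (Suc n))"] by simp
  then obtain ps where ps: "\<And>n. nm (\<lambda>z. g z - P (ps n) z) < inverse (real (Suc n))" by metis
  show ?thesis
  proof (rule cis_parts(5)[OF M])
    show "(\<lambda>z. f z * P (ps n) z) \<in> M" for n by (rule polyM)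
    show "(\<lambda>z. f z * g z) \<in> H" using fH g by simp
    show "(\<lambda>n. nm (\<lambda>z. f z * P (ps n) z - f z * g z)) \<longlonglongrightarrow> 0"
    proof (rule Lim_null_comparison)
      show "\<forall>\<^sub>F n in sequentially. norm (nm (\<lambda>z. f z * P (ps n) z - f z * g z)) \<le> CM * nm f * inverse (real (Suc n))"
      proof (intro always_eventually allI)
        fix n
        have e: "(\<lambda>z. f z * P (ps n) z - f z * g z) = (\<lambda>z. f z * (P (ps n) z - g z))" by (simp add: algebra_simps)
        have dH: "(\<lambda>z. P (ps n) z - g z) \<in> H" using g by simp
        have "nm (\<lambda>z. f z * (P (ps n) z - g z)) \<le> CM * nm f * nm (\<lambda>z. P (ps n) z - g z)"
          using mul_bound[OF fH dH] by simp
        also have "nm (\<lambda>z. P (ps n) z - g z) = nm (\<lambda>z. g z - P (ps n) z)" using nm_sym g by simp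
        also have "CM * nm f * nm (\<lambda>z. g z - P (ps n) z) \<le> CM * nm f * inverse (real (Suc n))"
          using ps[of n] CM0 fH by (intro mult_left_mono) auto
        finally have "nm (\<lambda>z. f z * (P (ps n) z - g z)) \<le> CM * nm f * inverse (real (Suc n))" .
        moreover have "nm (\<lambda>z. f z * (P (ps n) z - g z)) \<ge> 0" using fH dH by simp
        ultimately show "norm (nm (\<lambda>z. f z * P (ps n) z - f z * g z)) \<le> CM * nm f * inverse (real (Suc n))"
          unfolding e by simp
      qed
      show "(\<lambda>n. CM * nm f * inverse (real (Suc n))) \<longlonglongrightarrow> 0"
        using tendsto_mult_right_zero[OF LIMSEQ_inverse_real_of_nat] by simp
    qed
  qed
qed

lemma cis_ideal': "closed_inv_subspace H ip M \<Longrightarrow> f \<in> M \<Longrightarrow> g \<in> H \<Longrightarrow> (\<lambda>z. g z * f z) \<in> M"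
  using cis_ideal[of M f g] by (simp add: mult.commute)

lemma H_cis: "closed_inv_subspace H ip H"
  unfolding closed_inv_subspace_def hdiff_def by auto

definition zz :: "complex \<Rightarrow> complex" where "zz = (\<lambda>z. z * one z)"
lemma zz_in[simp]: "zz \<in> H" unfolding zz_def by simp
lemma zz_mul: "h \<in> H \<Longrightarrow> (\<lambda>z. zz z * h z) = (\<lambda>z. z * h z)"
  by (auto simp: fun_eq_iff zz_def one_def out0)

definition Id :: "(complex \<Rightarrow> complex) \<Rightarrow> (complex \<Rightarrow> complex) set" where
  "Id f = {h\<in>H. \<forall>e>0. \<exists>g\<in>H. nm (\<lambda>z. h z - f z * g z) < e}"

lemma IdH: "h \<in> Id f \<Longrightarrow> h \<in> H" unfolding Id_def by simp
lemma IdD: "h \<in> Id f \<Longrightarrow> e > 0 \<Longrightarrow> \<exists>g\<in>H. nm (\<lambda>z. h z - f z * g z) < e" unfolding Id_def by simp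
lemma IdI: "h \<in> H \<Longrightarrow> (\<And>e. e > 0 \<Longrightarrow> \<exists>g\<in>H. nm (\<lambda>z. h z - f z * g z) < e) \<Longrightarrow> h \<in> Id f"
  unfolding Id_def by simp

lemma Id_cis: assumes f: "f \<in> H" shows "closed_inv_subspace H ip (Id f)"
  unfolding closed_inv_subspace_def hdiff_def Mz_def
proof (intro conjI allI ballI impI)
  show "Id f \<subseteq> H" using IdH by blast
  show "(\<lambda>_. 0) \<in> Id f"
  proof (rule IdI[OF zero_in])
    fix e :: real assume e: "e > 0"
    show "\<exists>g\<in>H. nm (\<lambda>z. (\<lambda>_. 0) z - f z * g z) < e"
    proof (rule bexI[of _ "\<lambda>_. 0"])
      have "(\<lambda>z. (\<lambda>_. 0) z - f z * (\<lambda>_. 0) z) = (\<lambda>_. (0::complex))" by simp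
      then show "nm (\<lambda>z. (\<lambda>_. 0) z - f z * (\<lambda>_. 0) z) < e" using e by simp
    qed simp
  qed
next
  fix h1 h2 assume h1: "h1 \<in> Id f" and h2: "h2 \<in> Id f"
  have h1H: "h1 \<in> H" and h2H: "h2 \<in> H" using h1 h2 IdH by auto
  show "(\<lambda>z. h1 z + h2 z) \<in> Id f"
  proof (rule IdI)
    show "(\<lambda>z. h1 z + h2 z) \<in> H" using h1H h2H by simp
    fix e :: real assume e: "e > 0"
    then have e2: "e/2 > 0" by simp
    obtain g1 where g1: "g1 \<in> H" "nm (\<lambda>z. h1 z - f z * g1 z) < e/2" using IdD[OF h1 e2] by blast
    obtain g2 where g2: "g2 \<in> H" "nm (\<lambda>z. h2 z - f z * g2 z) < e/2" using IdD[OF h2 e2] by blast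
    have d1: "(\<lambda>z. h1 z - f z * g1 z) \<in> H" using h1H g1 f by simp
    have d2: "(\<lambda>z. h2 z - f z * g2 z) \<in> H" using h2H g2 f by simp
    have eq: "(\<lambda>z. h1 z + h2 z - f z * (g1 z + g2 z)) = (\<lambda>z. (\<lambda>z. h1 z - f z * g1 z) z + (\<lambda>z. h2 z - f z * g2 z) z)"
      by (simp add: algebra_simps)
    have "nm (\<lambda>z. h1 z + h2 z - f z * (g1 z + g2 z)) \<le> nm (\<lambda>z. h1 z - f z * g1 z) + nm (\<lambda>z. h2 z - f z * g2 z)"
      unfolding eq by (rule nm_tri[OF d1 d2])
    then have "nm (\<lambda>z. h1 z + h2 z - f z * (\<lambda>z. g1 z + g2 z) z) < e" using g1(2) g2(2) by simp
    moreover have "(\<lambda>z. g1 z + g2 z) \<in> H" using g1 g2 by simp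
    ultimately show "\<exists>g\<in>H. nm (\<lambda>z. h1 z + h2 z - f z * g z) < e" by (intro bexI[of _ "\<lambda>z. g1 z + g2 z"])
  qed
next
  fix h c assume h: "h \<in> Id f"
  have hH: "h \<in> H" using h IdH by auto
  show "(\<lambda>z. c * h z) \<in> Id f"
  proof (rule IdI)
    show "(\<lambda>z. c * h z) \<in> H" using hH by simp
    fix e :: real assume e: "e > 0"
    have c1: "cmod c + 1 > 0" by (simp add: add_nonneg_pos)
    have ce: "e / (cmod c + 1) > 0" using e c1 by simp
    obtain g where g: "g \<in> H" "nm (\<lambda>z. h z - f z * g z) < e / (cmod c + 1)" using IdD[OF h ce] by blast
    have dH: "(\<lambda>z. h z - f z * g z) \<in> H" using hH g f by simp
    have eq: "(\<lambda>z. c * h z - f z * (c * g z)) = (\<lambda>z. c * (h z - f z * g z))" by (simp add: algebra_simps)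
    have "nm (\<lambda>z. c * h z - f z * (c * g z)) = cmod c * nm (\<lambda>z. h z - f z * g z)"
      unfolding eq by (rule nm_scale[OF dH])
    also have "\<dots> \<le> (cmod c + 1) * nm (\<lambda>z. h z - f z * g z)" using nm_nonneg[OF dH] by (intro mult_right_mono) auto
    also have "\<dots> < (cmod c + 1) * (e / (cmod c + 1))" using g(2) c1 by (intro mult_strict_left_mono)
    also have "\<dots> = e" using c1 by simp
    finally have "nm (\<lambda>z. c * h z - f z * (\<lambda>z. c * g z) z) < e" by simp
    moreover have "(\<lambda>z. c * g z) \<in> H" using g by simp
    ultimately show "\<exists>g\<in>H. nm (\<lambda>z. c * h z - f z * g z) < e" by (intro bexI[of _ "\<lambda>z. c * g z"])
  qed
next
  fix s h assume a: "(\<forall>n. s n \<in> Id f) \<and> h \<in> H \<and> (\<lambda>n. hnorm ip (\<lambda>z. s n z - h z)) \<longlonglongrightarrow> 0"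
  then have sI: "\<And>n. s n \<in> Id f" and hH: "h \<in> H" and lim: "(\<lambda>n. nm (\<lambda>z. s n z - h z)) \<longlonglongrightarrow> 0"
    by blast+
  have sH: "s n \<in> H" for n using sI IdH by blast
  show "h \<in> Id f"
  proof (rule IdI[OF hH])
    fix e :: real assume e: "e > 0"
    then have e2: "e/2 > 0" by simp
    have "eventually (\<lambda>n. nm (\<lambda>z. s n z - h z) < e/2) sequentially"
      using order_tendstoD(2)[OF lim e2] .
    then obtain n where n: "nm (\<lambda>z. s n z - h z) < e/2" unfolding eventually_sequentially by blast
    obtain g where g: "g \<in> H" "nm (\<lambda>z. s n z - f z * g z) < e/2" using IdD[OF sI[of n] e2] by blast
    have fgH: "(\<lambda>z. f z * g z) \<in> H" using f g by simp
    have "nm (\<lambda>z. h z - f z * g z) \<le> nm (\<lambda>z. h z - s n z) + nm (\<lambda>z. s n z - f z * g z)"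
      using nm_tri3[OF hH sH fgH] by simp
    also have "nm (\<lambda>z. h z - s n z) = nm (\<lambda>z. s n z - h z)" using nm_sym[OF hH sH] .
    finally have "nm (\<lambda>z. h z - f z * g z) < e" using n g(2) by linarith
    then show "\<exists>g\<in>H. nm (\<lambda>z. h z - f z * g z) < e" using g(1) by blast
  qed
next
  fix h assume h: "h \<in> Id f"
  have hH: "h \<in> H" using h IdH by auto
  show "(\<lambda>z. z * h z) \<in> Id f"
  proof (rule IdI)
    show "(\<lambda>z. z * h z) \<in> H" using hH by simp
    fix e :: real assume e: "e > 0"
    define K where "K = CM * nm zz + 1"
    have K: "K > 0" unfolding K_def using CM0 nm_nonneg[OF zz_in] by (simp add: add_nonneg_pos)
    have eK: "e / K > 0" using e K by simp
    obtain g where g: "g \<in> H" "nm (\<lambda>z. h z - f z * g z) < e / K" using IdD[OF h eK] by blast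
    have dH: "(\<lambda>z. h z - f z * g z) \<in> H" using hH g f by simp
    have eq: "(\<lambda>z. z * h z - f z * (z * g z)) = (\<lambda>z. zz z * (h z - f z * g z))"
    proof -
      have "(\<lambda>z. zz z * (h z - f z * g z)) = (\<lambda>z. z * (h z - f z * g z))" using zz_mul[OF dH] .
      then show ?thesis by (simp add: algebra_simps)
    qed
    have "nm (\<lambda>z. z * h z - f z * (z * g z)) \<le> CM * nm zz * nm (\<lambda>z. h z - f z * g z)"
      unfolding eq by (rule mul_bound[OF zz_in dH])
    also have "\<dots> \<le> K * nm (\<lambda>z. h z - f z * g z)" unfolding K_def using nm_nonneg[OF dH] by (intro mult_right_mono) auto
    also have "\<dots> < K * (e / K)" using g(2) K by (intro mult_strict_left_mono)
    also have "\<dots> = e" using K by simp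
    finally have "nm (\<lambda>z. z * h z - f z * (\<lambda>z. z * g z) z) < e" by simp
    moreover have "(\<lambda>z. z * g z) \<in> H" using g by simp
    ultimately show "\<exists>g\<in>H. nm (\<lambda>z. z * h z - f z * g z) < e" by (intro bexI[of _ "\<lambda>z. z * g z"])
  qed
qed

lemma f_Id: "f \<in> H \<Longrightarrow> f \<in> Id f"
  unfolding Id_def
proof (intro CollectI conjI allI impI)
  fix e :: real assume f: "f \<in> H" and e: "e > 0"
  have "(\<lambda>z. f z - f z * one z) = (\<lambda>_. 0)" using mul_one[OF f] by (simp add: fun_eq_iff)
  then show "\<exists>g\<in>H. nm (\<lambda>z. f z - f z * g z) < e" using e by (intro bexI[of _ one]) auto
qed

lemma Id_inv: assumes f: "f \<in> H" and o: "one \<in> Id f" shows "\<exists>\<psi>\<in>H. \<forall>z\<in>disc. f z * \<psi> z = 1"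
proof -
  have e: "1 / (2 * CM) > 0" using CM0 by simp
  obtain g where g: "g \<in> H" "nm (\<lambda>z. one z - f z * g z) < 1 / (2 * CM)" using o e unfolding Id_def by blast
  define x where "x = (\<lambda>z. one z - f z * g z)"
  have xH: "x \<in> H" unfolding x_def using f g by simp
  have "CM * nm x \<le> CM * (1 / (2 * CM))" unfolding x_def using g CM0 by (intro mult_left_mono) auto
  also have "\<dots> = 1/2" using CM0 by simp
  finally obtain y where y: "y \<in> H" "(\<lambda>z. (one z - x z) * y z) = one" using neumann[OF xH] by blast
  have "\<forall>z\<in>disc. f z * (g z * y z) = 1"
  proof
    fix z assume z: "z \<in> disc"
    have "(one z - x z) * y z = one z" using fun_cong[OF y(2), of z] .
    then show "f z * (g z * y z) = 1" using z unfolding x_def one_def by (simp add: algebra_simps)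
  qed
  then show ?thesis using g y by (intro bexI[of _ "\<lambda>z. g z * y z"]) auto
qed

lemma inv_iff: assumes f: "f \<in> H" shows "invertible_mult H f \<longleftrightarrow> (\<exists>\<psi>\<in>H. \<forall>z\<in>disc. f z * \<psi> z = 1)"
proof
  assume "invertible_mult H f"
  then obtain \<psi> where \<psi>: "\<psi> \<in> Mult H" "\<forall>z\<in>disc. f z * \<psi> z = 1" unfolding invertible_mult_def by blast
  have "(\<lambda>z. \<psi> z * one z) \<in> H" using \<psi>(1) one_in unfolding Mult_def by blast
  moreover have "\<forall>z\<in>disc. f z * (\<lambda>z. \<psi> z * one z) z = 1" using \<psi>(2) by (simp add: one_def)
  ultimately show "\<exists>\<psi>\<in>H. \<forall>z\<in>disc. f z * \<psi> z = 1" by (intro bexI[of _ "\<lambda>z. \<psi> z * one z"]) auto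
next
  assume "\<exists>\<psi>\<in>H. \<forall>z\<in>disc. f z * \<psi> z = 1"
  then obtain \<psi> where \<psi>: "\<psi> \<in> H" "\<forall>z\<in>disc. f z * \<psi> z = 1" by blast
  have "f \<in> Mult H" "\<psi> \<in> Mult H" using f \<psi>(1) unfolding Mult_def by auto
  then show "invertible_mult H f" using \<psi>(2) unfolding invertible_mult_def by blast
qed

lemma inv_one: "f \<in> H \<Longrightarrow> \<forall>z\<in>disc. f z * \<psi> z = 1 \<Longrightarrow> (\<lambda>z. f z * \<psi> z) = one"
  by (auto simp: fun_eq_iff one_def out0)

lemma cyc_iff: assumes f: "f \<in> H" shows "cyclic H ip f \<longleftrightarrow> (\<exists>\<psi>\<in>H. \<forall>z\<in>disc. f z * \<psi> z = 1)"
proof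
  assume "cyclic H ip f"
  then have "\<Inter>{M. closed_inv_subspace H ip M \<and> f \<in> M} = H" unfolding cyclic_def .
  moreover have "Id f \<in> {M. closed_inv_subspace H ip M \<and> f \<in> M}" using Id_cis[OF f] f_Id[OF f] by blast
  ultimately have "H \<subseteq> Id f" by blast
  then have "one \<in> Id f" by auto
  then show "\<exists>\<psi>\<in>H. \<forall>z\<in>disc. f z * \<psi> z = 1" by (rule Id_inv[OF f])
next
  assume "\<exists>\<psi>\<in>H. \<forall>z\<in>disc. f z * \<psi> z = 1"
  then obtain \<psi> where \<psi>: "\<psi> \<in> H" "\<forall>z\<in>disc. f z * \<psi> z = 1" by blast
  have "\<Inter>{M. closed_inv_subspace H ip M \<and> f \<in> M} = H"
  proof
    show "\<Inter>{M. closed_inv_subspace H ip M \<and> f \<in> M} \<subseteq> H" using H_cis f by blast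
    show "H \<subseteq> \<Inter>{M. closed_inv_subspace H ip M \<and> f \<in> M}"
    proof
      fix h assume h: "h \<in> H"
      show "h \<in> \<Inter>{M. closed_inv_subspace H ip M \<and> f \<in> M}"
      proof
        fix M assume "M \<in> {M. closed_inv_subspace H ip M \<and> f \<in> M}"
        then have M: "closed_inv_subspace H ip M" and fM: "f \<in> M" by auto
        have "(\<lambda>z. f z * \<psi> z) \<in> M" by (rule cis_ideal[OF M fM \<psi>(1)])
        then have oM: "one \<in> M" using inv_one[OF f \<psi>(2)] by simp
        have "(\<lambda>z. one z * h z) \<in> M" by (rule cis_ideal[OF M oM h])
        then show "h \<in> M" using one_mul[OF h] by simp
      qed
    qed
  qed
  then show "cyclic H ip f" unfolding cyclic_def .
qed

lemma inv_nonvanish: assumes f: "f \<in> H" and \<psi>: "\<psi> \<in> H" "\<forall>z\<in>disc. f z * \<psi> z = 1"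
  shows "\<exists>g. continuous_on (cball 0 1) g \<and> (\<forall>z\<in>disc. g z = f z) \<and> (\<forall>z\<in>cball 0 1. g z \<noteq> 0)"
proof (intro exI conjI ballI)
  show "continuous_on (cball 0 1) (ext f)" by (rule ext_cont[OF f])
  show "ext f z = f z" if "z \<in> disc" for z using ext_disc[OF f that] .
  fix l :: complex assume l: "l \<in> cball 0 1"
  have "ext f l * ext \<psi> l = ext (\<lambda>z. f z * \<psi> z) l" using ext_mul[OF f \<psi>(1) l] by simp
  also have "\<dots> = ext one l" using inv_one[OF f \<psi>(2)] by simp
  also have "\<dots> = 1" by (rule ext_one[OF l])
  finally show "ext f l \<noteq> 0" by auto
qed

lemma poly_factor: "poly p z = (z - l) * poly (synthetic_div p l) z + poly p (l::complex)"
proof -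
  have "poly p z = poly ([:-l, 1:] * synthetic_div p l + [:poly p l:]) z" using synthetic_div_correct'[of l p] by simp
  also have "\<dots> = (z - l) * poly (synthetic_div p l) z + poly p l" by (simp add: poly_mult algebra_simps)
  finally show ?thesis .
qed

lemma res_local:
  assumes M: "closed_inv_subspace H ip M" and f: "f \<in> H" and fM: "f \<in> M" and l: "l \<in> cball 0 1"
    and nz: "ext f l \<noteq> 0"
  shows "\<exists>g\<in>H. (\<lambda>z. z * g z - l * g z - one z) \<in> M"
proof -
  define a where "a = cmod (ext f l)"
  have a: "a > 0" unfolding a_def using nz by simp
  have d: "a / (4 * CM) > 0" using a CM0 by simp
  obtain p where p: "nm (\<lambda>z. f z - P p z) < a / (4 * CM)" using approx[OF f d] by blast
  define \<beta> where "\<beta> = poly p l"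
  have dfH: "(\<lambda>z. P p z - f z) \<in> H" using f by simp
  have nsym: "nm (\<lambda>z. P p z - f z) = nm (\<lambda>z. f z - P p z)" using nm_sym f P_in by metis
  have CMd: "CM * nm (\<lambda>z. P p z - f z) < a / 4"
  proof -
    have "CM * nm (\<lambda>z. P p z - f z) < CM * (a / (4 * CM))" using p nsym CM0 by (intro mult_strict_left_mono) auto
    also have "\<dots> = a / 4" using CM0 by simp
    finally show ?thesis .
  qed
  have "cmod (\<beta> - ext f l) = cmod (ext (\<lambda>z. P p z - f z) l)"
    unfolding \<beta>_def using ext_diff[OF P_in f l] ext_P[OF l] by simp
  also have "\<dots> \<le> CM * nm (\<lambda>z. P p z - f z)" by (rule ext_bound[OF dfH l])
  finally have bclose: "cmod (\<beta> - ext f l) < a / 4" using CMd by linarith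
  have "a \<le> cmod \<beta> + cmod (\<beta> - ext f l)" unfolding a_def
    using norm_triangle_ineq4[of \<beta> "\<beta> - ext f l"] by simp
  then have bbig: "cmod \<beta> > a / 2" using bclose a by linarith
  have bne: "\<beta> \<noteq> 0" using bbig a by auto
  define q where "q = synthetic_div p l"
  have hp: "poly p z = (z - l) * poly q z + \<beta>" for z unfolding q_def \<beta>_def by (rule poly_factor)
  define x where "x = (\<lambda>z. (1/\<beta>) * (P p z - f z))"
  have xH: "x \<in> H" unfolding x_def using dfH by (rule scale_in)
  have "nm x = cmod (1/\<beta>) * nm (\<lambda>z. P p z - f z)" unfolding x_def by (rule nm_scale[OF dfH])
  then have "CM * nm x = (CM * nm (\<lambda>z. P p z - f z)) / cmod \<beta>" by (simp add: norm_divide)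
  also have "\<dots> \<le> (a / 4) / (a / 2)"
    using CMd bbig a CM0 nm_nonneg[OF dfH] by (intro frac_le) auto
  also have "\<dots> = 1/2" using a by simp
  finally obtain r where r: "r \<in> H" "(\<lambda>z. (one z - x z) * r z) = one" using neumann[OF xH] by blast
  define g where "g = (\<lambda>z. (-1/\<beta>) * (P q z * r z))"
  have gH: "g \<in> H" unfolding g_def using r by (intro scale_in mul_in P_in)
  have eq: "(\<lambda>z. z * g z - l * g z - one z) = (\<lambda>z. (-1/\<beta>) * (f z * r z))"
  proof
    fix z
    show "z * g z - l * g z - one z = (-1/\<beta>) * (f z * r z)"
    proof (cases "z \<in> disc")
      case True
      have hr: "r z - x z * r z = 1" using fun_cong[OF r(2), of z] True by (simp add: one_def algebra_simps)
      have hx: "\<beta> * x z = poly p z - f z" unfolding x_def using True bne by (simp add: P_def)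
      have fz: "f z = (z - l) * poly q z + \<beta> - \<beta> * x z" using hx hp[of z] by simp
      have "f z * r z = (z - l) * poly q z * r z + \<beta> * (r z - x z * r z)" unfolding fz by (simp add: algebra_simps)
      also have "\<dots> = (z - l) * poly q z * r z + \<beta>" using hr by simp
      finally have fr: "f z * r z = (z - l) * poly q z * r z + \<beta>" .
      have "z * g z - l * g z - one z = (-1/\<beta>) * ((z - l) * poly q z * r z) - 1"
        unfolding g_def using True by (simp add: P_def one_def algebra_simps)
      also have "\<dots> = (-1/\<beta>) * ((z - l) * poly q z * r z + \<beta>)" using bne by (simp add: algebra_simps)
      also have "\<dots> = (-1/\<beta>) * (f z * r z)" using fr by simp
      finally show ?thesis .
    next
      case False
      then show ?thesis unfolding g_def using out0[OF r(1) False] out0[OF f False] by (simp add: one_def)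
    qed
  qed
  have "(\<lambda>z. f z * r z) \<in> M" by (rule cis_ideal[OF M fM r(1)])
  then have "(\<lambda>z. (-1/\<beta>) * (f z * r z)) \<in> M" by (rule cis_parts(4)[OF M])
  then show ?thesis using gH eq by (intro bexI[of _ g]) simp_all
qed

context
  fixes M v0
  assumes M: "closed_inv_subspace H ip M" and v0: "v0 \<in> H" and orth: "\<And>x. x \<in> M \<Longrightarrow> ip x v0 = 0"
    and allres: "\<And>l. \<exists>g\<in>H. (\<lambda>z. z * g z - l * g z - one z) \<in> M"
begin

definition G :: "complex \<Rightarrow> complex \<Rightarrow> complex" where
  "G l = (SOME g. g \<in> H \<and> (\<lambda>z. z * g z - l * g z - one z) \<in> M)"

lemma G: "G l \<in> H \<and> (\<lambda>z. z * G l z - l * G l z - one z) \<in> M"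
proof -
  have "\<exists>g. g \<in> H \<and> (\<lambda>z. z * g z - l * g z - one z) \<in> M" using allres[of l] by blast
  then show ?thesis unfolding G_def by (rule someI_ex)
qed

lemma GH: "G l \<in> H" using G by blast
lemma GM: "(\<lambda>z. z * G l z - l * G l z - one z) \<in> M" using G by blast

definition L :: "(complex \<Rightarrow> complex) \<Rightarrow> (complex \<Rightarrow> complex) \<Rightarrow> complex" where
  "L u x = ip (\<lambda>z. u z * x z) v0"

lemma MH: "x \<in> M \<Longrightarrow> x \<in> H" using cis_parts(1)[OF M] by blast

lemma L_M: "u \<in> H \<Longrightarrow> x \<in> M \<Longrightarrow> L u x = 0"
  unfolding L_def using cis_ideal'[OF M] orth by blast

lemma L_diff: "u \<in> H \<Longrightarrow> x \<in> H \<Longrightarrow> y \<in> H \<Longrightarrow> L u (\<lambda>z. x z - y z) = L u x - L u y"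
proof -
  assume u: "u \<in> H" and x: "x \<in> H" and y: "y \<in> H"
  have "(\<lambda>z. u z * (x z - y z)) = (\<lambda>z. (\<lambda>z. u z * x z) z - (\<lambda>z. u z * y z) z)" by (simp add: algebra_simps)
  then show ?thesis unfolding L_def using ip_diff[of "\<lambda>z. u z * x z" "\<lambda>z. u z * y z" v0] u x y v0 by simp
qed

lemma L_add: "u \<in> H \<Longrightarrow> x \<in> H \<Longrightarrow> y \<in> H \<Longrightarrow> L u (\<lambda>z. x z + y z) = L u x + L u y"
proof -
  assume u: "u \<in> H" and x: "x \<in> H" and y: "y \<in> H"
  have "(\<lambda>z. u z * (x z + y z)) = (\<lambda>z. (\<lambda>z. u z * x z) z + (\<lambda>z. u z * y z) z)" by (simp add: algebra_simps)
  then show ?thesis unfolding L_def using ip_add[of "\<lambda>z. u z * x z" "\<lambda>z. u z * y z" v0] u x y v0 by simp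
qed

lemma L_scale: "u \<in> H \<Longrightarrow> x \<in> H \<Longrightarrow> L u (\<lambda>z. c * x z) = c * L u x"
proof -
  assume u: "u \<in> H" and x: "x \<in> H"
  have "(\<lambda>z. u z * (c * x z)) = (\<lambda>z. c * (\<lambda>z. u z * x z) z)" by (simp add: algebra_simps)
  then show ?thesis unfolding L_def using ip_scale[of "\<lambda>z. u z * x z" v0 c] u x v0 by simp
qed

lemma L_bound: "u \<in> H \<Longrightarrow> x \<in> H \<Longrightarrow> cmod (L u x) \<le> CM * nm u * nm x * nm v0"
proof -
  assume u: "u \<in> H" and x: "x \<in> H"
  have uxH: "(\<lambda>z. u z * x z) \<in> H" using u x by simp
  have "cmod (L u x) \<le> nm (\<lambda>z. u z * x z) * nm v0" unfolding L_def by (rule cauchy_schwarz[OF uxH v0])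
  also have "\<dots> \<le> (CM * nm u * nm x) * nm v0" using mul_bound[OF u x] v0 by (intro mult_right_mono) auto
  finally show ?thesis .
qed

lemma res_diff:
  assumes g1: "g1 \<in> H" "(\<lambda>z. z * g1 z - l * g1 z - one z) \<in> M"
    and g2: "g2 \<in> H" "(\<lambda>z. z * g2 z - l * g2 z - one z) \<in> M"
  shows "(\<lambda>z. g1 z - g2 z) \<in> M"
proof -
  define d where "d = (\<lambda>z. g1 z - g2 z)"
  define e1 where "e1 = (\<lambda>z. z * g1 z - l * g1 z - one z)"
  have dH: "d \<in> H" unfolding d_def using g1 g2 by simp
  have "(\<lambda>z. (\<lambda>z. z * g1 z - l * g1 z - one z) z - (\<lambda>z. z * g2 z - l * g2 z - one z) z) \<in> M"
    using cis_diff[OF M g1(2) g2(2)] .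
  moreover have "(\<lambda>z. (\<lambda>z. z * g1 z - l * g1 z - one z) z - (\<lambda>z. z * g2 z - l * g2 z - one z) z) = (\<lambda>z. z * d z - l * d z)"
    unfolding d_def by (simp add: algebra_simps)
  ultimately have zd: "(\<lambda>z. z * d z - l * d z) \<in> M" by simp
  have A: "(\<lambda>z. g1 z * (z * d z - l * d z)) \<in> M" using cis_ideal'[OF M zd g1(1)] .
  have B: "(\<lambda>z. d z * e1 z) \<in> M" unfolding e1_def using cis_ideal'[OF M g1(2) dH] .
  have "(\<lambda>z. (\<lambda>z. g1 z * (z * d z - l * d z)) z - (\<lambda>z. d z * e1 z) z) \<in> M" using cis_diff[OF M A B] .
  moreover have "(\<lambda>z. (\<lambda>z. g1 z * (z * d z - l * d z)) z - (\<lambda>z. d z * e1 z) z) = d"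
  proof
    fix z
    have "g1 z * (z * d z - l * d z) - d z * e1 z = d z * one z" unfolding e1_def by (simp add: algebra_simps)
    also have "\<dots> = d z" using fun_cong[OF mul_one[OF dH], of z] by simp
    finally show "(\<lambda>z. g1 z * (z * d z - l * d z)) z - (\<lambda>z. d z * e1 z) z = d z" by simp
  qed
  ultimately show ?thesis unfolding d_def by simp
qed

lemma L_res:
  assumes u: "u \<in> H" and g1: "g1 \<in> H" "(\<lambda>z. z * g1 z - l * g1 z - one z) \<in> M"
    and g2: "g2 \<in> H" "(\<lambda>z. z * g2 z - l * g2 z - one z) \<in> M"
  shows "L u g1 = L u g2"
proof -
  have "L u g1 - L u g2 = L u (\<lambda>z. g1 z - g2 z)" using L_diff[OF u g1(1) g2(1)] by simp
  also have "\<dots> = 0" using L_M[OF u res_diff[OF g1 g2]] .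
  finally show ?thesis by simp
qed


lemma phi_deriv:
  assumes u: "u \<in> H"
  shows "((\<lambda>l. L u (G l)) has_field_derivative L u (\<lambda>z. G l0 z * G l0 z)) (at l0)"
proof -
  define g0 where "g0 = G l0"
  have g0H: "g0 \<in> H" unfolding g0_def by (rule GH)
  have e0M: "(\<lambda>z. z * g0 z - l0 * g0 z - one z) \<in> M" unfolding g0_def by (rule GM)
  define \<rho> where "\<rho> = 1 / (2 * CM * (nm g0 + 1))"
  have ng0: "nm g0 \<ge> 0" using g0H by simp
  have \<rho>: "\<rho> > 0" unfolding \<rho>_def using CM0 ng0 by (simp add: add_nonneg_pos)
  define R where "R \<mu> = (SOME r. r \<in> H \<and> (\<lambda>z. (one z - (\<mu> - l0) * g0 z) * r z) = one \<and> nm r \<le> 2 * nm one)" for \<mu>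
  have R: "R \<mu> \<in> H \<and> (\<lambda>z. (one z - (\<mu> - l0) * g0 z) * R \<mu> z) = one \<and> nm (R \<mu>) \<le> 2 * nm one"
    if \<mu>: "cmod (\<mu> - l0) < \<rho>" for \<mu>
  proof -
    have aH: "(\<lambda>z. (\<mu> - l0) * g0 z) \<in> H" using g0H by (rule scale_in)
    have "CM * nm (\<lambda>z. (\<mu> - l0) * g0 z) = CM * cmod (\<mu> - l0) * nm g0" using nm_scale[OF g0H] by simp
    also have "\<dots> \<le> CM * \<rho> * nm g0" using \<mu> CM0 ng0 by (intro mult_right_mono mult_left_mono) auto
    also have "\<dots> \<le> CM * \<rho> * (nm g0 + 1)" using CM0 \<rho> by (intro mult_left_mono) auto
    also have "\<dots> = 1 / 2"
    proof -
      have "nm g0 * (2 * CM) \<ge> 0" using CM0 ng0 by simp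
      then have "2 * CM + nm g0 * (2 * CM) \<noteq> 0" using CM0 by linarith
      then show ?thesis unfolding \<rho>_def using CM0 ng0 by (simp add: field_simps)
    qed
    finally have "CM * nm (\<lambda>z. (\<mu> - l0) * g0 z) \<le> 1/2" .
    then have "\<exists>r\<in>H. (\<lambda>z. (one z - (\<lambda>z. (\<mu> - l0) * g0 z) z) * r z) = one \<and> nm r \<le> 2 * nm one"
      by (rule neumann[OF aH])
    then have "\<exists>r. r \<in> H \<and> (\<lambda>z. (one z - (\<mu> - l0) * g0 z) * r z) = one \<and> nm r \<le> 2 * nm one" by blast
    then show ?thesis unfolding R_def by (rule someI_ex)
  qed
  have Rpt: "R \<mu> z = one z + (\<mu> - l0) * (g0 z * R \<mu> z)" if \<mu>: "cmod (\<mu> - l0) < \<rho>" for \<mu> z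
  proof (cases "z \<in> disc")
    case True
    have "(one z - (\<mu> - l0) * g0 z) * R \<mu> z = one z" using fun_cong[OF conjunct1[OF conjunct2[OF R[OF \<mu>]]], of z] by simp
    then show ?thesis using True by (simp add: one_def algebra_simps)
  next
    case False
    then show ?thesis using out0[OF conjunct1[OF R[OF \<mu>]] False] out0[OF g0H False] by (simp add: one_def)
  qed
  have phi_eq: "L u (G \<mu>) = L u g0 + (\<mu> - l0) * L u (\<lambda>z. g0 z * (g0 z * R \<mu> z))"
    if \<mu>: "cmod (\<mu> - l0) < \<rho>" for \<mu>
  proof -
    have RH: "R \<mu> \<in> H" using R[OF \<mu>] by blast
    have gRH: "(\<lambda>z. g0 z * R \<mu> z) \<in> H" using g0H RH by simp
    have "(\<lambda>z. z * (g0 z * R \<mu> z) - \<mu> * (g0 z * R \<mu> z) - one z) = (\<lambda>z. R \<mu> z * (z * g0 z - l0 * g0 z - one z))"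
    proof
      fix z
      have h: "R \<mu> z = one z + (\<mu> - l0) * (g0 z * R \<mu> z)" by (rule Rpt[OF \<mu>])
      show "z * (g0 z * R \<mu> z) - \<mu> * (g0 z * R \<mu> z) - one z = R \<mu> z * (z * g0 z - l0 * g0 z - one z)"
      proof (cases "z \<in> disc")
        case True
        then have o: "one z = 1" by (simp add: one_def)
        show ?thesis using h unfolding o by (simp add: algebra_simps)
      next
        case False
        then show ?thesis using out0[OF RH False] out0[OF g0H False] by (simp add: one_def)
      qed
    qed
    moreover have "(\<lambda>z. R \<mu> z * (z * g0 z - l0 * g0 z - one z)) \<in> M" using cis_ideal'[OF M e0M RH] .
    ultimately have resm: "(\<lambda>z. z * (g0 z * R \<mu> z) - \<mu> * (g0 z * R \<mu> z) - one z) \<in> M" by simp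
    have "L u (G \<mu>) = L u (\<lambda>z. g0 z * R \<mu> z)"
      by (rule L_res[OF u GH GM gRH]) (use resm in simp)
    also have "(\<lambda>z. g0 z * R \<mu> z) = (\<lambda>z. g0 z + (\<mu> - l0) * (g0 z * (g0 z * R \<mu> z)))"
    proof
      fix z show "g0 z * R \<mu> z = g0 z + (\<mu> - l0) * (g0 z * (g0 z * R \<mu> z))"
      proof (cases "z \<in> disc")
        case True
        have "R \<mu> z = 1 + (\<mu> - l0) * (g0 z * R \<mu> z)" using Rpt[OF \<mu>, of z] True by (simp add: one_def)
        then have "g0 z * R \<mu> z = g0 z * (1 + (\<mu> - l0) * (g0 z * R \<mu> z))" by simp
        then show ?thesis by (simp add: algebra_simps)
      next
        case False then show ?thesis using out0[OF g0H False] by simp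
      qed
    qed
    also have "L u (\<lambda>z. g0 z + (\<mu> - l0) * (g0 z * (g0 z * R \<mu> z))) = L u g0 + L u (\<lambda>z. (\<mu> - l0) * (g0 z * (g0 z * R \<mu> z)))"
      using L_add[OF u g0H, of "\<lambda>z. (\<mu> - l0) * (g0 z * (g0 z * R \<mu> z))"] g0H RH by simp
    also have "L u (\<lambda>z. (\<mu> - l0) * (g0 z * (g0 z * R \<mu> z))) = (\<mu> - l0) * L u (\<lambda>z. g0 z * (g0 z * R \<mu> z))"
      using L_scale[OF u, of "\<lambda>z. g0 z * (g0 z * R \<mu> z)" "\<mu> - l0"] g0H RH by simp
    finally show ?thesis .
  qed
  define D where "D = L u (\<lambda>z. g0 z * g0 z)"
  define K where "K = CM * nm u * nm v0 * (CM * nm (\<lambda>z. g0 z * g0 z) * (CM * nm g0 * (2 * nm one)))"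
  have quot: "(L u (G \<mu>) - L u (G l0)) / (\<mu> - l0) - D = L u (\<lambda>z. (g0 z * g0 z) * (R \<mu> z - one z))"
    if \<mu>: "cmod (\<mu> - l0) < \<rho>" "\<mu> \<noteq> l0" for \<mu>
  proof -
    have RH: "R \<mu> \<in> H" using R[OF \<mu>(1)] by blast
    have "(L u (G \<mu>) - L u (G l0)) / (\<mu> - l0) = L u (\<lambda>z. g0 z * (g0 z * R \<mu> z))"
      using phi_eq[OF \<mu>(1)] \<mu>(2) unfolding g0_def by simp
    moreover have "L u (\<lambda>z. g0 z * (g0 z * R \<mu> z)) - D = L u (\<lambda>z. (\<lambda>z. g0 z * (g0 z * R \<mu> z)) z - (\<lambda>z. g0 z * g0 z) z)"
      unfolding D_def using L_diff[OF u, of "\<lambda>z. g0 z * (g0 z * R \<mu> z)" "\<lambda>z. g0 z * g0 z"] g0H RH by simp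
    moreover have "(\<lambda>z. (\<lambda>z. g0 z * (g0 z * R \<mu> z)) z - (\<lambda>z. g0 z * g0 z) z) = (\<lambda>z. (g0 z * g0 z) * (R \<mu> z - one z))"
    proof
      fix z show "(\<lambda>z. g0 z * (g0 z * R \<mu> z)) z - (\<lambda>z. g0 z * g0 z) z = (g0 z * g0 z) * (R \<mu> z - one z)"
        using out0[OF g0H, of z] by (cases "z \<in> disc") (auto simp: one_def algebra_simps)
    qed
    ultimately show ?thesis by simp
  qed
  have qbound: "cmod ((L u (G \<mu>) - L u (G l0)) / (\<mu> - l0) - D) \<le> K * cmod (\<mu> - l0)"
    if \<mu>: "cmod (\<mu> - l0) < \<rho>" "\<mu> \<noteq> l0" for \<mu>
  proof -
    have RH: "R \<mu> \<in> H" and Rn: "nm (R \<mu>) \<le> 2 * nm one" using R[OF \<mu>(1)] by blast+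
    have ggH: "(\<lambda>z. g0 z * g0 z) \<in> H" using g0H by simp
    have Rm1: "(\<lambda>z. R \<mu> z - one z) = (\<lambda>z. (\<mu> - l0) * (g0 z * R \<mu> z))"
    proof
      fix z show "R \<mu> z - one z = (\<mu> - l0) * (g0 z * R \<mu> z)" using Rpt[OF \<mu>(1), of z] by (metis add_diff_cancel_left')
    qed
    have gRH: "(\<lambda>z. g0 z * R \<mu> z) \<in> H" using g0H RH by simp
    have RmH: "(\<lambda>z. R \<mu> z - one z) \<in> H" using RH by simp
    have nR: "nm (\<lambda>z. R \<mu> z - one z) \<le> cmod (\<mu> - l0) * (CM * nm g0 * (2 * nm one))"
    proof -
      have "nm (\<lambda>z. R \<mu> z - one z) = cmod (\<mu> - l0) * nm (\<lambda>z. g0 z * R \<mu> z)" unfolding Rm1 by (rule nm_scale[OF gRH])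
      also have "\<dots> \<le> cmod (\<mu> - l0) * (CM * nm g0 * nm (R \<mu>))" using mul_bound[OF g0H RH] by (intro mult_left_mono) auto
      also have "\<dots> \<le> cmod (\<mu> - l0) * (CM * nm g0 * (2 * nm one))"
        using Rn CM0 ng0 by (intro mult_left_mono) auto
      finally show ?thesis .
    qed
    have prodH: "(\<lambda>z. (g0 z * g0 z) * (R \<mu> z - one z)) \<in> H" using ggH RmH by (rule mul_in)
    have "cmod (L u (\<lambda>z. (g0 z * g0 z) * (R \<mu> z - one z))) \<le> CM * nm u * nm (\<lambda>z. (g0 z * g0 z) * (R \<mu> z - one z)) * nm v0"
      by (rule L_bound[OF u prodH])
    also have "nm (\<lambda>z. (g0 z * g0 z) * (R \<mu> z - one z)) \<le> CM * nm (\<lambda>z. g0 z * g0 z) * nm (\<lambda>z. R \<mu> z - one z)"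
      by (rule mul_bound[OF ggH RmH])
    also have "\<dots> \<le> CM * nm (\<lambda>z. g0 z * g0 z) * (cmod (\<mu> - l0) * (CM * nm g0 * (2 * nm one)))"
      using nR CM0 ggH by (intro mult_left_mono) auto
    finally have "cmod (L u (\<lambda>z. (g0 z * g0 z) * (R \<mu> z - one z))) \<le> CM * nm u * (CM * nm (\<lambda>z. g0 z * g0 z) * (cmod (\<mu> - l0) * (CM * nm g0 * (2 * nm one)))) * nm v0"
      using CM0 u v0 by (simp add: mult_left_mono mult_right_mono)
    also have "\<dots> = K * cmod (\<mu> - l0)" unfolding K_def by (simp add: algebra_simps)
    finally show ?thesis using quot[OF \<mu>] by simp
  qed
  have lim0: "((\<lambda>\<mu>. K * cmod (\<mu> - l0)) \<longlongrightarrow> 0) (at l0)"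
  proof -
    have "((\<lambda>\<mu>. K * cmod (\<mu> - l0)) \<longlongrightarrow> K * cmod (l0 - l0)) (at l0)" by (intro tendsto_intros)
    then show ?thesis by simp
  qed
  have "((\<lambda>\<mu>. (L u (G \<mu>) - L u (G l0)) / (\<mu> - l0) - D) \<longlongrightarrow> 0) (at l0)"
  proof (rule Lim_null_comparison[OF _ lim0])
    show "\<forall>\<^sub>F \<mu> in at l0. norm ((L u (G \<mu>) - L u (G l0)) / (\<mu> - l0) - D) \<le> K * cmod (\<mu> - l0)"
      unfolding eventually_at
    proof (intro exI conjI ballI impI)
      show "\<rho> > 0" by (rule \<rho>)
      fix \<mu> :: complex assume "\<mu> \<noteq> l0 \<and> dist \<mu> l0 < \<rho>"
      then show "norm ((L u (G \<mu>) - L u (G l0)) / (\<mu> - l0) - D) \<le> K * cmod (\<mu> - l0)"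
        using qbound by (simp add: dist_norm)
    qed
  qed
  then have "((\<lambda>\<mu>. (L u (G \<mu>) - L u (G l0)) / (\<mu> - l0)) \<longlongrightarrow> D) (at l0)" by (rule LIM_zero_cancel)
  then show ?thesis unfolding has_field_derivative_iff D_def g0_def .
qed


lemma phi_bound_large:
  assumes u: "u \<in> H" and mu: "cmod \<mu> \<ge> 2 * CM * nm zz + 1"
  shows "cmod (L u (G \<mu>)) \<le> CM * nm u * nm v0 * (2 * nm one) / cmod \<mu>"
proof -
  have nzz: "nm zz \<ge> 0" by simp
  have mpos: "cmod \<mu> > 0" using mu CM0 nzz by (smt (verit) mult_nonneg_nonneg)
  then have mne: "\<mu> \<noteq> 0" by auto
  define x where "x = (\<lambda>z. (1/\<mu>) * zz z)"
  have xH: "x \<in> H" unfolding x_def by (rule scale_in[OF zz_in])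
  have "CM * nm x = CM * nm zz / cmod \<mu>" unfolding x_def using nm_scale[OF zz_in, of "1/\<mu>"] by (simp add: norm_divide)
  also have "\<dots> \<le> 1/2"
  proof -
    have "2 * (CM * nm zz) \<le> cmod \<mu>" using mu by linarith
    then show ?thesis using mpos by (simp add: divide_le_eq)
  qed
  finally obtain r where r: "r \<in> H" "(\<lambda>z. (one z - x z) * r z) = one" "nm r \<le> 2 * nm one"
    using neumann[OF xH] by blast
  define g where "g = (\<lambda>z. (-1/\<mu>) * r z)"
  have gH: "g \<in> H" unfolding g_def by (rule scale_in[OF r(1)])
  have "(\<lambda>z. z * g z - \<mu> * g z - one z) = (\<lambda>_. 0)"
  proof
    fix z show "z * g z - \<mu> * g z - one z = 0"
    proof (cases "z \<in> disc")
      case True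
      have "(one z - x z) * r z = one z" using fun_cong[OF r(2), of z] by simp
      then have "(1 - z / \<mu>) * r z = 1" using True unfolding x_def zz_def one_def by simp
      then show ?thesis unfolding g_def using True mne by (simp add: one_def field_simps)
    next
      case False then show ?thesis unfolding g_def using out0[OF r(1) False] by (simp add: one_def)
    qed
  qed
  then have gM: "(\<lambda>z. z * g z - \<mu> * g z - one z) \<in> M" using cis_parts(2)[OF M] by simp
  have "L u (G \<mu>) = L u g" by (rule L_res[OF u GH GM gH gM])
  then have "cmod (L u (G \<mu>)) \<le> CM * nm u * nm g * nm v0" using L_bound[OF u gH] by simp
  also have "nm g = nm r / cmod \<mu>" unfolding g_def using nm_scale[OF r(1), of "-1/\<mu>"] by (simp add: norm_divide)
  also have "CM * nm u * (nm r / cmod \<mu>) * nm v0 \<le> CM * nm u * (2 * nm one / cmod \<mu>) * nm v0"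
    using r(3) mpos CM0 u v0 by (intro mult_right_mono mult_left_mono divide_right_mono) auto
  also have "\<dots> = CM * nm u * nm v0 * (2 * nm one) / cmod \<mu>" by simp
  finally show ?thesis .
qed

lemma phi_inf: assumes u: "u \<in> H" shows "((\<lambda>l. L u (G l)) \<longlongrightarrow> 0) at_infinity"
  unfolding Lim_at_infinity
proof (intro allI impI)
  fix e :: real assume e: "e > 0"
  define K2 where "K2 = CM * nm u * nm v0 * (2 * nm one)"
  have K2: "K2 \<ge> 0" unfolding K2_def using CM0 u v0 by simp
  define b where "b = max (2 * CM * nm zz + 1) (K2 / e + 1)"
  show "\<exists>b. \<forall>x. b \<le> norm x \<longrightarrow> dist (L u (G x)) 0 < e"
  proof (intro exI allI impI)
    fix \<mu> :: complex assume mb: "b \<le> norm \<mu>"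
    have m1: "cmod \<mu> \<ge> 2 * CM * nm zz + 1" using mb unfolding b_def by simp
    have m2: "cmod \<mu> \<ge> K2 / e + 1" using mb unfolding b_def by simp
    have mpos: "cmod \<mu> > 0" using m2 K2 e by (smt (verit) divide_nonneg_pos)
    have "cmod (L u (G \<mu>)) \<le> K2 / cmod \<mu>" unfolding K2_def by (rule phi_bound_large[OF u m1])
    also have "K2 / cmod \<mu> < e"
    proof -
      have "K2 < e * cmod \<mu>"
      proof -
        have "e * (K2 / e + 1) = K2 + e" using e by (simp add: field_simps)
        moreover have "e * (K2 / e + 1) \<le> e * cmod \<mu>" using m2 e by (intro mult_left_mono) auto
        ultimately show ?thesis using e by linarith
      qed
      then show ?thesis using mpos by (simp add: divide_less_eq mult.commute)
    qed
    finally show "dist (L u (G \<mu>)) 0 < e" by simp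
  qed
qed

lemma phi_zero: assumes u: "u \<in> H" shows "L u (G l) = 0"
proof -
  have "(\<lambda>l. L u (G l)) holomorphic_on UNIV"
  proof (rule holomorphic_onI)
    fix l0 :: complex
    show "(\<lambda>l. L u (G l)) field_differentiable (at l0 within UNIV)"
      unfolding field_differentiable_def using phi_deriv[OF u, of l0] by auto
  qed
  then show ?thesis using Liouville_weak_0[OF _ phi_inf[OF u]] by blast
qed

lemma ip_one_zero: "ip one v0 = 0"
proof -
  define g where "g = G 0"
  have gH: "g \<in> H" unfolding g_def by (rule GH)
  have eM: "(\<lambda>z. z * g z - 0 * g z - one z) \<in> M" unfolding g_def by (rule GM)
  have eH: "(\<lambda>z. z * g z - 0 * g z - one z) \<in> H" using MH[OF eM] .
  have zgH: "(\<lambda>z. zz z * g z) \<in> H" using gH by simp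
  have "one = (\<lambda>z. (\<lambda>z. zz z * g z) z - (\<lambda>z. z * g z - 0 * g z - one z) z)"
    using zz_mul[OF gH] by (auto simp: fun_eq_iff dest: fun_cong)
  then have "ip one v0 = ip (\<lambda>z. (\<lambda>z. zz z * g z) z - (\<lambda>z. z * g z - 0 * g z - one z) z) v0" by simp
  also have "\<dots> = ip (\<lambda>z. zz z * g z) v0 - ip (\<lambda>z. z * g z - 0 * g z - one z) v0"
    by (rule ip_diff[OF zgH eH v0])
  also have "ip (\<lambda>z. z * g z - 0 * g z - one z) v0 = 0" by (rule orth[OF eM])
  also have "ip (\<lambda>z. zz z * g z) v0 = L zz g" unfolding L_def ..
  also have "\<dots> = 0" unfolding g_def by (rule phi_zero[OF zz_in])
  finally show ?thesis by simp
qed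

end

lemma nonvanish_inv:
  assumes f: "f \<in> H" and gc: "continuous_on (cball 0 1) g" and ge: "\<forall>z\<in>disc. g z = f z"
    and gnz: "\<forall>z\<in>cball 0 1. g z \<noteq> 0"
  shows "\<exists>\<psi>\<in>H. \<forall>z\<in>disc. f z * \<psi> z = 1"
proof -
  have Icis: "closed_inv_subspace H ip (Id f)" by (rule Id_cis[OF f])
  have "one \<in> Id f"
  proof (rule ccontr)
    assume nI: "one \<notin> Id f"
    have cs: "csub (Id f)" unfolding csub_def
      using cis_parts[OF Icis] by blast
    obtain p where pI: "p \<in> Id f" and porth: "\<And>v. v \<in> Id f \<Longrightarrow> ip (\<lambda>z. one z - p z) v = 0"
      using projection[OF cs one_in] by blast
    have pH: "p \<in> H" using pI IdH by blast
    define v0 where "v0 = (\<lambda>z. one z - p z)"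
    have v0H: "v0 \<in> H" unfolding v0_def using pH by simp
    have orth: "ip x v0 = 0" if x: "x \<in> Id f" for x
    proof -
      have xH: "x \<in> H" using x IdH by blast
      have "ip x v0 = cnj (ip v0 x)" using ip_cnj[OF v0H xH] .
      also have "ip v0 x = 0" unfolding v0_def using porth[OF x] .
      finally show ?thesis by simp
    qed
    have allres: "\<exists>h\<in>H. (\<lambda>z. z * h z - l * h z - one z) \<in> Id f" for l
    proof (cases "l \<in> cball 0 1")
      case True
      have "ext f l = g l" using ext_eqI[OF f gc _ True] ge by metis
      then have "ext f l \<noteq> 0" using gnz True by simp
      then show ?thesis using res_local[OF Icis f f_Id[OF f] True] by blast
    next
      case False
      then have "l \<notin> spectrum_op H ip Mz" using spec by simp
      then obtain S where S: "bounded_op_on H ip S" "\<forall>f\<in>H. (\<lambda>z. Mz (S f) z - l * S f z) = f"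
        unfolding spectrum_op_def by blast
      have SH: "S one \<in> H" using S(1) one_in unfolding bounded_op_on_def by blast
      have "(\<lambda>z. Mz (S one) z - l * S one z) = one" using S(2) one_in by blast
      then have "(\<lambda>z. z * S one z - l * S one z - one z) = (\<lambda>_. 0)"
        unfolding Mz_def by (auto simp: fun_eq_iff dest: fun_cong)
      then have "(\<lambda>z. z * S one z - l * S one z - one z) \<in> Id f" using cis_parts(2)[OF Icis] by simp
      then show ?thesis using SH by blast
    qed
    have "ip one v0 = 0" by (rule ip_one_zero[OF Icis v0H orth allres])
    moreover have "ip one v0 = ip v0 v0"
    proof -
      have "one = (\<lambda>z. v0 z + p z)" unfolding v0_def by simp
      then have "ip one v0 = ip (\<lambda>z. v0 z + p z) v0" by simp
      also have "\<dots> = ip v0 v0 + ip p v0" by (rule ip_add[OF v0H pH v0H])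
      also have "ip p v0 = 0" by (rule orth[OF pI])
      finally show ?thesis by simp
    qed
    ultimately have "v0 = (\<lambda>_. 0)" using ip_def0[OF v0H] by simp
    then have "one = p" unfolding v0_def by (auto simp: fun_eq_iff dest: fun_cong)
    then show False using nI pI by simp
  qed
  then show ?thesis by (rule Id_inv[OF f])
qed

lemma main:
  "(\<forall>f\<in>H. \<exists>g. continuous_on (cball 0 1) g \<and> (\<forall>z\<in>disc. g z = f z))
    \<and> (\<forall>M. closed_inv_subspace H ip M \<longrightarrow> (\<forall>f\<in>M. \<forall>g\<in>H. (\<lambda>z. f z * g z) \<in> M))
    \<and> (\<forall>f\<in>H. (cyclic H ip f \<longleftrightarrow> invertible_mult H f)
             \<and> (invertible_mult H f \<longleftrightarrow>
                  (\<exists>g. continuous_on (cball 0 1) g \<and> (\<forall>z\<in>disc. g z = f z)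
                       \<and> (\<forall>z\<in>cball 0 1. g z \<noteq> 0))))"
proof (intro conjI ballI allI impI)
  fix f assume f: "f \<in> H"
  show "\<exists>g. continuous_on (cball 0 1) g \<and> (\<forall>z\<in>disc. g z = f z)" by (rule ext_ex[OF f])
next
  fix M f g assume M: "closed_inv_subspace H ip M" and f: "f \<in> M" and g: "g \<in> H"
  show "(\<lambda>z. f z * g z) \<in> M" by (rule cis_ideal[OF M f g])
next
  fix f assume f: "f \<in> H"
  show "cyclic H ip f \<longleftrightarrow> invertible_mult H f" using cyc_iff[OF f] inv_iff[OF f] by simp
next
  fix f assume f: "f \<in> H"
  show "invertible_mult H f \<longleftrightarrow> (\<exists>g. continuous_on (cball 0 1) g \<and> (\<forall>z\<in>disc. g z = f z) \<and> (\<forall>z\<in>cball 0 1. g z \<noteq> 0))"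
  proof
    assume "invertible_mult H f"
    then obtain \<psi> where "\<psi> \<in> H" "\<forall>z\<in>disc. f z * \<psi> z = 1" using inv_iff[OF f] by blast
    then show "\<exists>g. continuous_on (cball 0 1) g \<and> (\<forall>z\<in>disc. g z = f z) \<and> (\<forall>z\<in>cball 0 1. g z \<noteq> 0)"
      using inv_nonvanish[OF f] by blast
  next
    assume "\<exists>g. continuous_on (cball 0 1) g \<and> (\<forall>z\<in>disc. g z = f z) \<and> (\<forall>z\<in>cball 0 1. g z \<noteq> 0)"
    then obtain g where "continuous_on (cball 0 1) g" "\<forall>z\<in>disc. g z = f z" "\<forall>z\<in>cball 0 1. g z \<noteq> 0" by blast
    then have "\<exists>\<psi>\<in>H. \<forall>z\<in>disc. f z * \<psi> z = 1" using nonvanish_inv[OF f] by blast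
    then show "invertible_mult H f" using inv_iff[OF f] by blast
  qed
qed

end

theorem theorem3p13:
  fixes H :: "(complex \<Rightarrow> complex) set"
    and ip :: "(complex \<Rightarrow> complex) \<Rightarrow> (complex \<Rightarrow> complex) \<Rightarrow> complex"
  assumes "property_A H ip"
    and "\<forall>f\<in>H. \<forall>g\<in>H. (\<lambda>z. f z * g z) \<in> H"
    and "spectrum_op H ip Mz = cball 0 1"
  shows "(\<forall>f\<in>H. \<exists>g. continuous_on (cball 0 1) g \<and> (\<forall>z\<in>disc. g z = f z))
    \<and> (\<forall>M. closed_inv_subspace H ip M \<longrightarrow> (\<forall>f\<in>M. \<forall>g\<in>H. (\<lambda>z. f z * g z) \<in> M))
    \<and> (\<forall>f\<in>H. (cyclic H ip f \<longleftrightarrow> invertible_mult H f)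
             \<and> (invertible_mult H f \<longleftrightarrow>
                  (\<exists>g. continuous_on (cball 0 1) g \<and> (\<forall>z\<in>disc. g z = f z)
                       \<and> (\<forall>z\<in>cball 0 1. g z \<noteq> 0))))"
proof -
  interpret FH H ip using assms by (unfold_locales) auto
  show ?thesis by (rule main)
qed

end
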